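(* Let $Y\in\mathbb{R}$, $Z\in\mathbb{R}^p$, $X=(X^{(1)},\dots,X^{(d)})\in\mathbb{R}^d$ and $W\in\mathbb{R}^d$ be random variables/vectors with finite second moments, with $$\mathrm{Cov}\begin{pmatrix} Z\\ X\\ W\end{pmatrix}=\begin{bmatrix} A & B & C\\ B^{\mathsf T} & D & F\\ C^{\mathsf T} & F^{\mathsf T} & G\end{bmatrix},\quad A\in\mathbb{R}^{p\times p},\ B,C\in\mathbb{R}^{p\times d},\ D,F,G\in\mathbb{R}^{d\times d}.$$ Let $(\alpha,\beta_Z,\beta_X)=\arg\min_{a,b_Z,b_X}\mathbb{E}\big[\tfrac12(Y-a-Z^{\mathsf T}b_Z-X^{\mathsf T}b_X)^2\big]$ and $\beta=(\beta_Z,\beta_X)$. Let $(Y_i,Z_i,X_i,W_i)_{i=1}^N$ be samples satisfying: (i) the samples are identically distributed with the law of $(Y,Z,X,W)$, and the sample first and second moments converge in probability to the corresponding population moments as $N\to\infty$; (ii) with $\varepsilon_i=Y_i-\alpha-Z_i^{\mathsf T}\beta_Z-X_i^{\mathsf T}\beta_X$, $\varepsilon_i$ is uncorrelated with $W_i-X_i$; (iii) the covariance matrices of $(Z,W)$ and of $(Z,X)$ are positive definite. Let $\hat\beta^{(\mathrm{ME})}=(\hat\beta_Z^{(\mathrm{ME})},\hat\beta_X^{(\mathrm{ME})})$ be the OLS coefficients of $(Z_i,W_i)$ in the regression of $Y_i$ on an intercept, $Z_i$ and $W_i$, and let $\mathrm{bias}^{(\mathrm{ME})}_{\beta_X}=\operatorname{plim}_{N\to\infty}\big(\hat\beta_X^{(\mathrm{ME})}-\beta_X\big)$.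 Suppose the entries of $X$ are exactly the pollutant concentrations (no entry of $Z$ is a pollutant), and assume: (Pairwise Partial $\mathrm{PC}_+$) for every $j\ne j'$ in $\{1,\dots,d\}$, the partial correlation of $X^{(j)}$ and $X^{(j')}$ conditional on all remaining entries of $(Z,X)$ is positive; (CUME) $W=X+E$ with $E$ independent of $(Z,X,Y)$ and $\Sigma_E:=\mathrm{Cov}(E)=\mathrm{diag}(a_1,\dots,a_d)$ with $a_j\ge 0$. Then $$\mathrm{bias}^{(\mathrm{ME})}_{\beta_X}=-\Omega\,\Sigma_E\,\beta_X,\qquad \Omega:=\big(\Sigma_E+D-C^{\mathsf T}A^{-1}C\big)^{-1},$$ and for all $j,j'\in\{1,\dots,d\}$: $\Omega_{jj}\in(0,1/a_j]$ (with $1/a_j=\infty$ when $a_j=0$), and $\Omega_{jj'}\le 0$ if $j\ne j'$.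
   Context: Partial correlation of two entries of a random vector given other entries is the correlation of their population linear-regression residuals on those other entries. "plim" denotes limit in probability. *)

theory Defs
  imports "HOL-Probability.Probability"
begin

section \<open>Convergence in probability (to a constant), via outer probability\<close>

text \<open>The random elements converge in probability to the constant c:
  for every eps>0 the event {dist (Xn n) c > eps} is, eventually, contained in
  a measurable event of arbitrarily small probability. (For measurable Xn this is
  the usual definition: prob {dist (Xn n) c > eps} tends to 0.)\<close>
definition conv_in_prob ::
  "'a measure \<Rightarrow> (nat \<Rightarrow> 'a \<Rightarrow> 'b::metric_space) \<Rightarrow> 'b \<Rightarrow> bool" where
  "conv_in_prob M Xn c \<longleftrightarrow>
     (\<forall>e>0. \<forall>\<delta>>0. eventually (\<lambda>n. \<exists>A\<in>sets M.
        {\<omega>\<in>space M. dist (Xn n \<omega>) c > e} \<subseteq> A \<and> measure M A < \<delta>) sequentially)"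

section \<open>Covariances\<close>

definition cov :: "'a measure \<Rightarrow> ('a \<Rightarrow> real) \<Rightarrow> ('a \<Rightarrow> real) \<Rightarrow> real" where
  "cov M U V = (\<integral>\<omega>. U \<omega> * V \<omega> \<partial>M) - (\<integral>\<omega>. U \<omega> \<partial>M) * (\<integral>\<omega>. V \<omega> \<partial>M)"

definition corr :: "'a measure \<Rightarrow> ('a \<Rightarrow> real) \<Rightarrow> ('a \<Rightarrow> real) \<Rightarrow> real" where
  "corr M U V = cov M U V / sqrt (cov M U U * cov M V V)"

text \<open>Cross-covariance matrix Cov(U,V) = E[U V^T] - E[U] E[V]^T.\<close>
definition covmat ::
  "'a measure \<Rightarrow> ('a \<Rightarrow> real^'m) \<Rightarrow> ('a \<Rightarrow> real^'n) \<Rightarrow> real^'n^'m" where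
  "covmat M U V = (\<chi> i j. cov M (\<lambda>\<omega>. U \<omega> $ i) (\<lambda>\<omega>. V \<omega> $ j))"

text \<open>Stacking two random vectors (U,V) into one vector indexed by 'm + 'n.\<close>
definition stack :: "real^'m \<Rightarrow> real^'n \<Rightarrow> real^('m + 'n)" where
  "stack u v = (\<chi> k. case k of Inl i \<Rightarrow> u $ i | Inr j \<Rightarrow> v $ j)"

definition pos_def_mat :: "real^'n^'n \<Rightarrow> bool" where
  "pos_def_mat S \<longleftrightarrow> transpose S = S \<and> (\<forall>u. u \<noteq> 0 \<longrightarrow> u \<bullet> (S *v u) > 0)"

section \<open>Population linear regression residuals and partial correlation\<close>

text \<open>Residual of the population linear regression (with intercept) of U on the
  entries V$k, k \<in> S, of the random vector V.\<close>
definition lin_resid ::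
  "'a measure \<Rightarrow> ('a \<Rightarrow> real) \<Rightarrow> ('a \<Rightarrow> real^'k) \<Rightarrow> 'k set \<Rightarrow> 'a \<Rightarrow> real" where
  "lin_resid M U V S =
     (let cb = (SOME cb :: real \<times> ('k \<Rightarrow> real). \<forall>c' b'.
          (\<integral>\<omega>. (U \<omega> - fst cb - (\<Sum>k\<in>S. snd cb k * V \<omega> $ k))\<^sup>2 \<partial>M)
            \<le> (\<integral>\<omega>. (U \<omega> - c' - (\<Sum>k\<in>S. b' k * V \<omega> $ k))\<^sup>2 \<partial>M))
      in (\<lambda>\<omega>. U \<omega> - fst cb - (\<Sum>k\<in>S. snd cb k * V \<omega> $ k)))"

text \<open>Partial correlation of entries i and j of V given all remaining entries of V.\<close>
definition partial_corr ::
  "'a measure \<Rightarrow> ('a \<Rightarrow> real^'k) \<Rightarrow> 'k \<Rightarrow> 'k \<Rightarrow> real" where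
  "partial_corr M V i j =
     corr M (lin_resid M (\<lambda>\<omega>. V \<omega> $ i) V (UNIV - {i, j}))
            (lin_resid M (\<lambda>\<omega>. V \<omega> $ j) V (UNIV - {i, j}))"

section \<open>Coordinates of (Y,Z,X,W), used for first and second moments\<close>

text \<open>The constant 1 together with all scalar coordinates of (y,z,x,w).
  Products f*g with f,g in this set range over all first and second moments.\<close>
definition coords :: "((real \<times> (real^'p) \<times> (real^'d) \<times> (real^'d)) \<Rightarrow> real) set" where
  "coords = {\<lambda>_. 1, \<lambda>(y,z,x,w). y}
     \<union> {\<lambda>(y,z,x,w). z $ k | k. True}
     \<union> {\<lambda>(y,z,x,w). x $ k | k. True}
     \<union> {\<lambda>(y,z,x,w). w $ k | k. True}"

end

theory Submission
  imports Defs
begin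

(* ---- P1 ---- *)
lemma conv_in_prob_transfer:
  fixes Vn :: "nat \<Rightarrow> 'a \<Rightarrow> 'b::metric_space" and Bn :: "nat \<Rightarrow> 'a \<Rightarrow> 'c::metric_space"
  assumes V: "conv_in_prob M Vn v"
    and H: "\<And>e. e > 0 \<Longrightarrow> \<exists>d>0. \<forall>n>0. \<forall>\<omega>\<in>space M. dist (Vn n \<omega>) v < d \<longrightarrow> dist (Bn n \<omega>) b \<le> e"
  shows "conv_in_prob M Bn b"
  unfolding conv_in_prob_def
proof (intro allI impI)
  fix e \<delta> :: real assume e: "e > 0" and \<delta>: "\<delta> > 0"
  obtain d where d: "d > 0" and dH: "\<forall>n>0. \<forall>\<omega>\<in>space M. dist (Vn n \<omega>) v < d \<longrightarrow> dist (Bn n \<omega>) b \<le> e/2"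
    using H[of "e/2"] e by auto
  have ev: "eventually (\<lambda>n. \<exists>A\<in>sets M. {\<omega>\<in>space M. dist (Vn n \<omega>) v > d/2} \<subseteq> A \<and> measure M A < \<delta>) sequentially"
    using V[unfolded conv_in_prob_def, rule_format, of "d/2" \<delta>] d \<delta> by simp
  show "eventually (\<lambda>n. \<exists>A\<in>sets M. {\<omega>\<in>space M. dist (Bn n \<omega>) b > e} \<subseteq> A \<and> measure M A < \<delta>) sequentially"
    using ev eventually_gt_at_top[of 0]
  proof eventually_elim
    case (elim n)
    then obtain A where A: "A \<in> sets M" "{\<omega>\<in>space M. dist (Vn n \<omega>) v > d/2} \<subseteq> A" "measure M A < \<delta>" by auto
    have "{\<omega>\<in>space M. dist (Bn n \<omega>) b > e} \<subseteq> {\<omega>\<in>space M. dist (Vn n \<omega>) v > d/2}"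
    proof safe
      fix \<omega> assume "\<omega> \<in> space M" "dist (Bn n \<omega>) b > e"
      then show "dist (Vn n \<omega>) v > d/2"
      proof -
        have "\<not> dist (Vn n \<omega>) v < d"
        proof
          assume "dist (Vn n \<omega>) v < d"
          then have "dist (Bn n \<omega>) b \<le> e/2" using dH elim(2) \<open>\<omega> \<in> space M\<close> by blast
          then show False using \<open>dist (Bn n \<omega>) b > e\<close> e by linarith
        qed
        then show ?thesis using d by linarith
      qed
    qed
    then show ?case using A by blast
  qed
qed

lemma conv_in_prob_cont:
  fixes Vn :: "nat \<Rightarrow> 'a \<Rightarrow> 'b::metric_space" and g :: "'b \<Rightarrow> 'c::metric_space"
  assumes V: "conv_in_prob M Vn v" and g: "isCont g v"
  shows "conv_in_prob M (\<lambda>n \<omega>. g (Vn n \<omega>)) (g v)"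
proof (rule conv_in_prob_transfer[OF V])
  fix e :: real assume "e > 0"
  then obtain d where d0: "d > 0" and dd: "\<forall>x. x \<noteq> v \<and> dist x v < d \<longrightarrow> dist (g x) (g v) < e"
    using g unfolding isCont_def LIM_def by blast
  then have "\<forall>x. dist x v < d \<longrightarrow> dist (g x) (g v) < e" using \<open>e > 0\<close> by (metis dist_self)
  with d0 show "\<exists>d>0. \<forall>n>0. \<forall>\<omega>\<in>space M. dist (Vn n \<omega>) v < d \<longrightarrow> dist (g (Vn n \<omega>)) (g v) \<le> e"
    by (meson less_imp_le)
qed

lemma conv_in_prob_cong:
  assumes "conv_in_prob M Vn v" "\<And>n \<omega>. Vn n \<omega> = Wn n \<omega>" "v = w"
  shows "conv_in_prob M Wn w"
  using assms unfolding conv_in_prob_def by simp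

lemma conv_in_prob_pair:
  fixes Uq :: "nat \<Rightarrow> 'a \<Rightarrow> 'b::metric_space" and Vn :: "nat \<Rightarrow> 'a \<Rightarrow> 'c::metric_space"
  assumes P: "prob_space M" and U: "conv_in_prob M Uq u" and V: "conv_in_prob M Vn v"
  shows "conv_in_prob M (\<lambda>n \<omega>. (Uq n \<omega>, Vn n \<omega>)) (u, v)"
  unfolding conv_in_prob_def
proof (intro allI impI)
  fix e \<delta> :: real assume e: "e > 0" and \<delta>: "\<delta> > 0"
  have evU: "eventually (\<lambda>n. \<exists>A\<in>sets M. {\<omega>\<in>space M. dist (Uq n \<omega>) u > e/2} \<subseteq> A \<and> measure M A < \<delta>/2) sequentially"
    using U[unfolded conv_in_prob_def, rule_format, of "e/2" "\<delta>/2"] e \<delta> by simp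
  have evV: "eventually (\<lambda>n. \<exists>A\<in>sets M. {\<omega>\<in>space M. dist (Vn n \<omega>) v > e/2} \<subseteq> A \<and> measure M A < \<delta>/2) sequentially"
    using V[unfolded conv_in_prob_def, rule_format, of "e/2" "\<delta>/2"] e \<delta> by simp
  show "eventually (\<lambda>n. \<exists>A\<in>sets M. {\<omega>\<in>space M. dist (Uq n \<omega>, Vn n \<omega>) (u, v) > e} \<subseteq> A \<and> measure M A < \<delta>) sequentially"
    using evU evV
  proof eventually_elim
    case (elim n)
    then obtain A1 A2 where A: "A1 \<in> sets M" "{\<omega>\<in>space M. dist (Uq n \<omega>) u > e/2} \<subseteq> A1" "measure M A1 < \<delta>/2"
      "A2 \<in> sets M" "{\<omega>\<in>space M. dist (Vn n \<omega>) v > e/2} \<subseteq> A2" "measure M A2 < \<delta>/2" by auto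
    have "{\<omega>\<in>space M. dist (Uq n \<omega>, Vn n \<omega>) (u, v) > e} \<subseteq> A1 \<union> A2"
    proof safe
      fix \<omega> assume w: "\<omega> \<in> space M" "dist (Uq n \<omega>, Vn n \<omega>) (u, v) > e" "\<omega> \<notin> A2"
      have "dist (Uq n \<omega>, Vn n \<omega>) (u, v) \<le> dist (Uq n \<omega>) u + dist (Vn n \<omega>) v"
        unfolding dist_Pair_Pair using sqrt_sum_squares_le_sum_abs[of "dist (Uq n \<omega>) u" "dist (Vn n \<omega>) v"] by simp
      moreover have "dist (Vn n \<omega>) v \<le> e/2" using w A by force
      ultimately have "dist (Uq n \<omega>) u > e/2" using w by linarith
      then show "\<omega> \<in> A1" using w A by blast
    qed
    moreover have "measure M (A1 \<union> A2) < \<delta>"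
      using measure_Un_le[OF A(1) A(4)] A by linarith
    ultimately show ?case using A by blast
  qed
qed

lemma conv_in_prob_vec:
  fixes Uq :: "nat \<Rightarrow> 'a \<Rightarrow> ('b::real_normed_vector)^'k::finite"
  assumes P: "prob_space M" and U: "\<And>k. conv_in_prob M (\<lambda>n \<omega>. Uq n \<omega> $ k) (u $ k)"
  shows "conv_in_prob M Uq u"
  unfolding conv_in_prob_def
proof (intro allI impI)
  fix e \<delta> :: real assume e: "e > 0" and \<delta>: "\<delta> > 0"
  define c where "c = real CARD('k)"
  have c: "c > 0" unfolding c_def by simp
  have "\<forall>k. eventually (\<lambda>n. \<exists>A\<in>sets M. {\<omega>\<in>space M. dist (Uq n \<omega> $ k) (u $ k) > e/c} \<subseteq> A \<and> measure M A < \<delta>/c) sequentially"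
    using U[unfolded conv_in_prob_def, rule_format, of "e/c" "\<delta>/c"] e \<delta> c by simp
  then have ev: "eventually (\<lambda>n. \<forall>k. \<exists>A\<in>sets M. {\<omega>\<in>space M. dist (Uq n \<omega> $ k) (u $ k) > e/c} \<subseteq> A \<and> measure M A < \<delta>/c) sequentially"
    by (simp add: eventually_all_finite)
  show "eventually (\<lambda>n. \<exists>A\<in>sets M. {\<omega>\<in>space M. dist (Uq n \<omega>) u > e} \<subseteq> A \<and> measure M A < \<delta>) sequentially"
    using ev
  proof eventually_elim
    case (elim n)
    then have "\<forall>k. \<exists>A. A \<in> sets M \<and> {\<omega>\<in>space M. dist (Uq n \<omega> $ k) (u $ k) > e/c} \<subseteq> A \<and> measure M A < \<delta>/c"
      by blast
    then obtain A where A0: "\<forall>k. A k \<in> sets M \<and> {\<omega>\<in>space M. dist (Uq n \<omega> $ k) (u $ k) > e/c} \<subseteq> A k \<and> measure M (A k) < \<delta>/c"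
      by (rule choice[THEN exE]) blast
    then have A: "\<And>k. A k \<in> sets M" "\<And>k. {\<omega>\<in>space M. dist (Uq n \<omega> $ k) (u $ k) > e/c} \<subseteq> A k"
      "\<And>k. measure M (A k) < \<delta>/c" by auto
    have "{\<omega>\<in>space M. dist (Uq n \<omega>) u > e} \<subseteq> (\<Union>k. A k)"
    proof safe
      fix \<omega> assume w: "\<omega> \<in> space M" "dist (Uq n \<omega>) u > e"
      show "\<omega> \<in> (\<Union>k. A k)"
      proof (rule ccontr)
        assume "\<omega> \<notin> (\<Union>k. A k)"
        then have "\<forall>k. dist (Uq n \<omega> $ k) (u $ k) \<le> e/c"
        proof (intro allI)
          fix k show "dist (Uq n \<omega> $ k) (u $ k) \<le> e/c"
          proof (rule ccontr)
            assume "\<not> dist (Uq n \<omega> $ k) (u $ k) \<le> e/c"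
            then have "\<omega> \<in> A k" using A(2)[of k] w by auto
            then show False using \<open>\<omega> \<notin> (\<Union>k. A k)\<close> by blast
          qed
        qed
        then have "(\<Sum>k\<in>UNIV. dist (Uq n \<omega> $ k) (u $ k)) \<le> (\<Sum>k\<in>(UNIV::'k set). e/c)"
          by (intro sum_mono) auto
        also have "\<dots> = e" using c unfolding c_def by simp
        finally have "(\<Sum>k\<in>UNIV. dist (Uq n \<omega> $ k) (u $ k)) \<le> e" .
        moreover have "dist (Uq n \<omega>) u \<le> (\<Sum>k\<in>UNIV. dist (Uq n \<omega> $ k) (u $ k))"
          unfolding dist_vec_def by (rule L2_set_le_sum) auto
        ultimately show False using w by linarith
      qed
    qed
    moreover have "measure M (\<Union>k. A k) \<le> (\<Sum>k\<in>UNIV. measure M (A k))"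
      by (rule measure_UNION_le) (auto simp: A)
    moreover have "(\<Sum>k\<in>UNIV. measure M (A k)) < (\<Sum>k\<in>(UNIV::'k set). \<delta>/c)"
      by (rule sum_strict_mono) (auto simp: A)
    moreover have "(\<Sum>k\<in>(UNIV::'k set). \<delta>/c) = \<delta>" using c unfolding c_def by simp
    moreover have "(\<Union>k. A k) \<in> sets M" using A by auto
    ultimately show ?case by (intro bexI[of _ "\<Union>k. A k"]) auto
  qed
qed

(* ---- P2 ---- *)
definition L2 :: "'a measure \<Rightarrow> ('a \<Rightarrow> real) set" where
  "L2 M = {f. f \<in> borel_measurable M \<and> integrable M (\<lambda>x. (f x)\<^sup>2)}"

context prob_space
begin

lemma L2I: "f \<in> borel_measurable M \<Longrightarrow> integrable M (\<lambda>x. (f x)\<^sup>2) \<Longrightarrow> f \<in> L2 M"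
  unfolding L2_def by auto

lemma L2_meas: "f \<in> L2 M \<Longrightarrow> f \<in> borel_measurable M"
  unfolding L2_def by auto

lemma L2_int: "f \<in> L2 M \<Longrightarrow> integrable M f"
  unfolding L2_def by (auto intro: square_integrable_imp_integrable)

lemma L2_int_mult: assumes "f \<in> L2 M" "g \<in> L2 M" shows "integrable M (\<lambda>x. f x * g x)"
proof (rule Bochner_Integration.integrable_bound[where f="\<lambda>x. (f x)\<^sup>2 + (g x)\<^sup>2"])
  show "integrable M (\<lambda>x. (f x)\<^sup>2 + (g x)\<^sup>2)" using assms unfolding L2_def by auto
  show "(\<lambda>x. f x * g x) \<in> borel_measurable M" using assms unfolding L2_def by auto
  show "AE x in M. norm (f x * g x) \<le> norm ((f x)\<^sup>2 + (g x)\<^sup>2)"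
  proof (rule AE_I2)
    fix x
    have "0 \<le> (\<bar>f x\<bar> - \<bar>g x\<bar>)\<^sup>2" by simp
    then have "2 * \<bar>f x * g x\<bar> \<le> (f x)\<^sup>2 + (g x)\<^sup>2"
      by (simp add: power2_eq_square abs_mult algebra_simps)
    then have "\<bar>f x * g x\<bar> \<le> (f x)\<^sup>2 + (g x)\<^sup>2" by simp
    then show "norm (f x * g x) \<le> norm ((f x)\<^sup>2 + (g x)\<^sup>2)" by simp
  qed
qed

lemma L2_const: "(\<lambda>_. c) \<in> L2 M"
  unfolding L2_def by auto

lemma L2_add: assumes "f \<in> L2 M" "g \<in> L2 M" shows "(\<lambda>x. f x + g x) \<in> L2 M"
proof (rule L2I)
  show "(\<lambda>x. f x + g x) \<in> borel_measurable M" using assms unfolding L2_def by auto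
  have "integrable M (\<lambda>x. (f x)\<^sup>2 + (g x)\<^sup>2 + 2 * (f x * g x))"
    using assms L2_int_mult[OF assms] unfolding L2_def by auto
  then show "integrable M (\<lambda>x. (f x + g x)\<^sup>2)"
    by (simp add: power2_sum mult.assoc)
qed

lemma L2_scale: assumes "f \<in> L2 M" shows "(\<lambda>x. c * f x) \<in> L2 M"
proof (rule L2I)
  show "(\<lambda>x. c * f x) \<in> borel_measurable M" using assms unfolding L2_def by auto
  have "integrable M (\<lambda>x. c\<^sup>2 * (f x)\<^sup>2)"
    using assms unfolding L2_def by auto
  then show "integrable M (\<lambda>x. (c * f x)\<^sup>2)"
    by (simp add: power_mult_distrib)
qed

lemma L2_diff: assumes "f \<in> L2 M" "g \<in> L2 M" shows "(\<lambda>x. f x - g x) \<in> L2 M"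
  using L2_add[OF assms(1) L2_scale[OF assms(2), of "-1"]] by simp

lemma L2_sum: assumes "\<And>i. i \<in> I \<Longrightarrow> f i \<in> L2 M" shows "(\<lambda>x. \<Sum>i\<in>I. f i x) \<in> L2 M"
  using assms
proof (induction I rule: infinite_finite_induct)
  case (infinite A) then show ?case by (simp add: L2_const)
next
  case empty then show ?case by (simp add: L2_const)
next
  case (insert i A)
  then show ?case by (simp add: L2_add)
qed

lemma L2_lin: assumes "\<And>i. i \<in> I \<Longrightarrow> f i \<in> L2 M" shows "(\<lambda>x. c + (\<Sum>i\<in>I. b i * f i x)) \<in> L2 M"
  by (intro L2_add L2_const L2_sum L2_scale assms)

lemma int_const: "(\<integral>x. c \<partial>M) = (c::real)"
  by (simp add: prob_space)

lemma cov_sym: "cov M f g = cov M g f"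
  unfolding cov_def by (simp add: mult.commute)

lemma cov_add_left: assumes "f \<in> L2 M" "g \<in> L2 M" "h \<in> L2 M"
  shows "cov M (\<lambda>x. f x + g x) h = cov M f h + cov M g h"
  using L2_int[OF assms(1)] L2_int[OF assms(2)] L2_int_mult[OF assms(1,3)] L2_int_mult[OF assms(2,3)]
  unfolding cov_def by (simp add: distrib_right algebra_simps)

lemma cov_scale_left: "cov M (\<lambda>x. c * f x) h = c * cov M f h"
  unfolding cov_def by (simp add: algebra_simps)

lemma cov_const_left: "cov M (\<lambda>x. c) h = 0"
  unfolding cov_def by (simp add: prob_space)

lemma cov_sum_left: assumes "\<And>i. i \<in> I \<Longrightarrow> f i \<in> L2 M" "h \<in> L2 M"
  shows "cov M (\<lambda>x. \<Sum>i\<in>I. f i x) h = (\<Sum>i\<in>I. cov M (f i) h)"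
  using assms
proof (induction I rule: infinite_finite_induct)
  case (infinite A) then show ?case by (simp add: cov_const_left)
next
  case empty then show ?case by (simp add: cov_const_left)
next
  case (insert i A)
  then have "cov M (\<lambda>x. f i x + (\<Sum>i\<in>A. f i x)) h = cov M (f i) h + cov M (\<lambda>x. \<Sum>i\<in>A. f i x) h"
    by (intro cov_add_left L2_sum) auto
  then show ?case using insert by simp
qed

lemma cov_lin_left: assumes "\<And>i. i \<in> I \<Longrightarrow> f i \<in> L2 M" "h \<in> L2 M"
  shows "cov M (\<lambda>x. c + (\<Sum>i\<in>I. b i * f i x)) h = (\<Sum>i\<in>I. b i * cov M (f i) h)"
proof -
  have "cov M (\<lambda>x. c + (\<Sum>i\<in>I. b i * f i x)) h = cov M (\<lambda>x. c) h + cov M (\<lambda>x. (\<Sum>i\<in>I. b i * f i x)) h"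
    by (intro cov_add_left L2_const L2_sum L2_scale assms)
  also have "\<dots> = (\<Sum>i\<in>I. cov M (\<lambda>x. b i * f i x) h)"
    by (simp add: cov_const_left cov_sum_left L2_scale assms)
  also have "\<dots> = (\<Sum>i\<in>I. b i * cov M (f i) h)"
    by (simp add: cov_scale_left)
  finally show ?thesis .
qed

lemma cov_lin_right: assumes "\<And>i. i \<in> I \<Longrightarrow> f i \<in> L2 M" "h \<in> L2 M"
  shows "cov M h (\<lambda>x. c + (\<Sum>i\<in>I. b i * f i x)) = (\<Sum>i\<in>I. b i * cov M h (f i))"
  using cov_lin_left[OF assms] by (simp add: cov_sym)

lemma cov_add_right: assumes "f \<in> L2 M" "g \<in> L2 M" "h \<in> L2 M"
  shows "cov M h (\<lambda>x. f x + g x) = cov M h f + cov M h g"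
  using cov_add_left[OF assms] by (simp add: cov_sym)

lemma cov_diff_left: assumes "f \<in> L2 M" "g \<in> L2 M" "h \<in> L2 M"
  shows "cov M (\<lambda>x. f x - g x) h = cov M f h - cov M g h"
  using cov_add_left[OF assms(1) L2_scale[OF assms(2), of "-1"] assms(3)] cov_scale_left[of "-1" g h]
  by simp

lemma cov_diff_right: assumes "f \<in> L2 M" "g \<in> L2 M" "h \<in> L2 M"
  shows "cov M h (\<lambda>x. f x - g x) = cov M h f - cov M h g"
  using cov_diff_left[OF assms] by (simp add: cov_sym)

lemma cov_const_right: "cov M h (\<lambda>x. c) = 0"
  using cov_const_left by (simp add: cov_sym)

lemma cov_scale_right: "cov M h (\<lambda>x. c * f x) = c * cov M h f"
  using cov_scale_left by (simp add: cov_sym)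

lemma sq_int_eq: assumes "f \<in> L2 M" shows "(\<integral>x. (f x)\<^sup>2 \<partial>M) = cov M f f + (\<integral>x. f x \<partial>M)\<^sup>2"
  unfolding cov_def by (simp add: power2_eq_square)

end

(* ---- P3 ---- *)
lemma mat_mult_entry: "(A ** B) $ i $ j = (\<Sum>k\<in>UNIV. A $ i $ k * B $ k $ j)"
  by (simp add: matrix_matrix_mult_def)

lemma mat1_entry: "(mat 1 :: real^'n^'n) $ i $ j = (if i = j then 1 else 0)"
  by (simp add: mat_def)

lemma mat_eq_entry: "(A = (B::real^'n^'m)) \<longleftrightarrow> (\<forall>i j. A $ i $ j = B $ i $ j)"
  by (simp add: vec_eq_iff)

lemma mult_eq_id_entry:
  "(A ** B = (mat 1::real^'n^'n)) \<longleftrightarrow> (\<forall>i j. (\<Sum>k\<in>UNIV. A $ i $ k * B $ k $ j) = (if i = j then 1 else 0))"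
  by (simp add: mat_eq_entry mat_mult_entry mat1_entry)

lemma quad_form: "x \<bullet> (S *v x) = (\<Sum>i\<in>UNIV. \<Sum>j\<in>UNIV. x $ i * S $ i $ j * x $ j)"
  by (simp add: inner_vec_def matrix_vector_mult_def sum_distrib_left mult.assoc)

lemma pd_inj: assumes "pos_def_mat S" "S *v x = 0" shows "x = 0"
  using assms unfolding pos_def_mat_def by (metis inner_zero_right less_irrefl)

lemma pd_inv: assumes "pos_def_mat (S::real^'n^'n)" shows "\<exists>P. S ** P = mat 1 \<and> P ** S = mat 1"
proof -
  have "\<exists>P. P ** S = mat 1" using pd_inj[OF assms] matrix_left_invertible_ker by blast
  then show ?thesis using matrix_left_right_inverse by blast
qed

lemma inv_unique: assumes "(A::real^'n^'n) ** B = mat 1" shows "matrix_inv A = B"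
proof -
  have BA: "B ** A = mat 1" using assms matrix_left_right_inverse by blast
  have "A ** matrix_inv A = mat 1 \<and> matrix_inv A ** A = mat 1"
    unfolding matrix_inv_def by (rule someI[of _ B]) (use assms BA in auto)
  then have "matrix_inv A = matrix_inv A ** (A ** B)" using assms by simp
  also have "\<dots> = B" using \<open>_ \<and> _\<close> by (simp add: matrix_mul_assoc)
  finally show ?thesis .
qed

lemma inv_props: assumes "(A::real^'n^'n) ** B = mat 1"
  shows "A ** matrix_inv A = mat 1" "matrix_inv A ** A = mat 1"
  using inv_unique[OF assms] assms matrix_left_right_inverse by auto

lemma sum_delta_mult_r: "(\<Sum>i\<in>UNIV. f i * (if i = (j::'n::finite) then c else 0)) = f j * (c::real)"
  by (subst sum.remove[of _ j]) auto

lemma sum_delta_mult_l: "(\<Sum>i\<in>UNIV. (if i = (j::'n::finite) then c else 0) * f i) = (c::real) * f j"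
  by (subst sum.remove[of _ j]) auto

lemma axis_nth1: "axis j (1::real) $ i = (if i = j then 1 else 0)"
  by (simp add: axis_def)

lemma mv_axis: "(P *v axis j (1::real)) $ i = P $ i $ j"
  by (simp add: matrix_vector_mult_def axis_nth1 sum_delta_mult_r)

lemma inner_axis1: "x \<bullet> axis j (1::real) = x $ j"
  by (simp add: inner_vec_def axis_nth1 sum_delta_mult_r)

lemma pd_inv_diag_pos:
  assumes pd: "pos_def_mat (S::real^'n^'n)" and SP: "S ** P = mat 1"
  shows "P $ j $ j > 0"
proof -
  define q where "q = P *v axis j 1"
  have Sq: "S *v q = axis j 1" unfolding q_def using SP by (simp add: matrix_vector_mul_assoc)
  have "q \<noteq> 0" using Sq by (metis axis_nth matrix_vector_mult_0_right one_neq_zero zero_index)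
  then have "q \<bullet> (S *v q) > 0" using pd unfolding pos_def_mat_def by auto
  moreover have "q \<bullet> (S *v q) = P $ j $ j"
    using Sq by (simp add: inner_axis1 q_def mv_axis)
  ultimately show ?thesis by simp
qed

lemma pd_inv_diag_le:
  assumes pd: "pos_def_mat (S::real^'n^'n)" and SP: "S ** P = mat 1"
    and bnd: "\<And>u. u \<bullet> (S *v u) \<ge> a * (u $ j)\<^sup>2" and a: "a > 0"
  shows "P $ j $ j \<le> 1 / a"
proof -
  define q where "q = P *v axis j 1"
  have Sq: "S *v q = axis j 1" unfolding q_def using SP by (simp add: matrix_vector_mul_assoc)
  have qj: "q $ j = P $ j $ j"
    unfolding q_def by (simp add: mv_axis)
  have "q \<bullet> (S *v q) = P $ j $ j" using Sq qj by (simp add: inner_axis1)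
  then have "P $ j $ j \<ge> a * (P $ j $ j)\<^sup>2" using bnd[of q] qj by simp
  moreover have "P $ j $ j > 0" by (rule pd_inv_diag_pos[OF pd SP])
  ultimately have "1 \<ge> a * P $ j $ j" by (simp add: power2_eq_square)
  then show ?thesis using a by (simp add: field_simps)
qed

definition zmat_on :: "'n set \<Rightarrow> real^'n^'n \<Rightarrow> bool" where
  "zmat_on J P \<longleftrightarrow> (\<forall>k\<in>J. \<forall>l\<in>J. k \<noteq> l \<longrightarrow> P $ k $ l \<le> 0)"

definition diagm :: "'n set \<Rightarrow> ('n \<Rightarrow> real) \<Rightarrow> real^'n^'n" where
  "diagm F a = (\<chi> k l. if k = l \<and> k \<in> F then a k else 0)"

lemma SM_step:
  fixes S P :: "real^'n^'n"
  assumes pd: "pos_def_mat S" and SP: "S ** P = mat 1" and PS: "P ** S = mat 1"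
    and Z: "zmat_on J P" and j: "j \<in> J" and a: "a \<ge> 0"
  defines "S' \<equiv> S + (\<chi> k l. if k = j \<and> l = j then a else 0)"
  shows "pos_def_mat S' \<and> (\<exists>P'. S' ** P' = mat 1 \<and> P' ** S' = mat 1 \<and> zmat_on J P')"
proof -
  define \<gamma> where "\<gamma> = 1 + a * P $ j $ j"
  have Pjj: "P $ j $ j > 0" by (rule pd_inv_diag_pos[OF pd SP])
  have \<gamma>: "\<gamma> > 0" unfolding \<gamma>_def using Pjj a by (simp add: add_pos_nonneg)
  define c where "c = a / \<gamma>"
  have c: "c \<ge> 0" unfolding c_def using a \<gamma> by simp
  have ca: "c * \<gamma> = a" unfolding c_def using \<gamma> by simp
  define P' where "P' = (\<chi> k l. P $ k $ l - c * P $ k $ j * P $ j $ l)"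
  have SPe: "\<And>k l. (\<Sum>m\<in>UNIV. S $ k $ m * P $ m $ l) = (if k = l then 1 else 0)"
    using SP unfolding mult_eq_id_entry by blast
  have PSe: "\<And>k l. (\<Sum>m\<in>UNIV. P $ k $ m * S $ m $ l) = (if k = l then 1 else 0)"
    using PS unfolding mult_eq_id_entry by blast
  have key: "- c + a * (1 - c * P $ j $ j) = 0"
    using ca unfolding \<gamma>_def by (simp add: algebra_simps)
  have "S' ** P' = mat 1"
    unfolding mult_eq_id_entry
  proof (intro allI)
    fix k l
    have "(\<Sum>m\<in>UNIV. S' $ k $ m * P' $ m $ l)
        = (\<Sum>m\<in>UNIV. S $ k $ m * P $ m $ l) - c * (\<Sum>m\<in>UNIV. S $ k $ m * P $ m $ j) * P $ j $ l
          + (\<Sum>m\<in>UNIV. (if k = j \<and> m = j then a else 0) * (P $ m $ l - c * P $ m $ j * P $ j $ l))"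
      unfolding S'_def P'_def
      by (simp add: algebra_simps sum.distrib sum_subtractf sum_distrib_left sum_distrib_right)
    also have "(\<Sum>m\<in>UNIV. (if k = j \<and> m = j then a else 0) * (P $ m $ l - c * P $ m $ j * P $ j $ l))
        = (if k = j then a * (P $ j $ l - c * P $ j $ j * P $ j $ l) else 0)"
      by (cases "k = j") (simp_all add: sum_delta_mult_l)
    finally have e: "(\<Sum>m\<in>UNIV. S' $ k $ m * P' $ m $ l) = (if k = l then 1 else 0)
        - c * (if k = j then 1 else 0) * P $ j $ l + (if k = j then a * (P $ j $ l - c * P $ j $ j * P $ j $ l) else 0)"
      unfolding SPe .
    have z: "- c * P $ j $ l + a * (P $ j $ l - c * P $ j $ j * P $ j $ l) = P $ j $ l * (- c + a * (1 - c * P $ j $ j))"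
      by (simp add: algebra_simps)
    show "(\<Sum>m\<in>UNIV. S' $ k $ m * P' $ m $ l) = (if k = l then 1 else 0)"
    proof (cases "k = j")
      case True
      then show ?thesis using e z key by simp
    next
      case False
      then show ?thesis using e by simp
    qed
  qed
  moreover have "P' ** S' = mat 1"
    unfolding mult_eq_id_entry
  proof (intro allI)
    fix k l
    have "(\<Sum>m\<in>UNIV. P' $ k $ m * S' $ m $ l)
        = (\<Sum>m\<in>UNIV. P $ k $ m * S $ m $ l) - c * P $ k $ j * (\<Sum>m\<in>UNIV. P $ j $ m * S $ m $ l)
          + (\<Sum>m\<in>UNIV. (P $ k $ m - c * P $ k $ j * P $ j $ m) * (if m = j \<and> l = j then a else 0))"
      unfolding S'_def P'_def
      by (simp add: algebra_simps sum.distrib sum_subtractf sum_distrib_left sum_distrib_right)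
    also have "(\<Sum>m\<in>UNIV. (P $ k $ m - c * P $ k $ j * P $ j $ m) * (if m = j \<and> l = j then a else 0))
        = (if l = j then a * (P $ k $ j - c * P $ k $ j * P $ j $ j) else 0)"
      by (cases "l = j") (simp_all add: sum_delta_mult_r)
    finally have e: "(\<Sum>m\<in>UNIV. P' $ k $ m * S' $ m $ l) = (if k = l then 1 else 0)
        - c * P $ k $ j * (if j = l then 1 else 0) + (if l = j then a * (P $ k $ j - c * P $ k $ j * P $ j $ j) else 0)"
      unfolding PSe .
    have z: "- c * P $ k $ j + a * (P $ k $ j - c * P $ k $ j * P $ j $ j) = P $ k $ j * (- c + a * (1 - c * P $ j $ j))"
      by (simp add: algebra_simps)
    show "(\<Sum>m\<in>UNIV. P' $ k $ m * S' $ m $ l) = (if k = l then 1 else 0)"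
    proof (cases "l = j")
      case True
      then show ?thesis using e z key by simp
    next
      case False
      then show ?thesis using e by simp
    qed
  qed
  moreover have "zmat_on J P'"
    unfolding zmat_on_def
  proof (intro ballI impI)
    fix k l assume k: "k \<in> J" and l: "l \<in> J" and kl: "k \<noteq> l"
    have "(1 - c * P $ j $ j) * \<gamma> = \<gamma> - (c * \<gamma>) * P $ j $ j" by (simp add: algebra_simps)
    also have "\<dots> = \<gamma> - a * P $ j $ j" using ca by simp
    also have "\<dots> = 1" unfolding \<gamma>_def by simp
    finally have "1 - c * P $ j $ j = 1 / \<gamma>" using \<gamma> by (simp add: field_simps)
    then have g1: "1 - c * P $ j $ j > 0" using \<gamma> by simp
    show "P' $ k $ l \<le> 0"
    proof (cases "k = j")
      case True
      then have "P' $ k $ l = P $ j $ l * (1 - c * P $ j $ j)" unfolding P'_def by (simp add: algebra_simps)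
      moreover have "P $ j $ l \<le> 0" using Z True kl l j unfolding zmat_on_def by auto
      ultimately show ?thesis using g1 by (simp add: mult_nonpos_nonneg)
    next
      case kj: False
      show ?thesis
      proof (cases "l = j")
        case True
        then have "P' $ k $ l = P $ k $ j * (1 - c * P $ j $ j)" unfolding P'_def by (simp add: algebra_simps)
        moreover have "P $ k $ j \<le> 0" using Z True kl k j unfolding zmat_on_def by auto
        ultimately show ?thesis using g1 by (simp add: mult_nonpos_nonneg)
      next
        case False
        have "P $ k $ j \<le> 0" "P $ j $ l \<le> 0" "P $ k $ l \<le> 0"
          using Z kj False kl k l j unfolding zmat_on_def by auto
        then have "c * P $ k $ j * P $ j $ l \<ge> 0" using c
          by (metis mult_nonneg_nonneg mult_nonpos_nonpos mult.assoc)
        then show ?thesis unfolding P'_def using \<open>P $ k $ l \<le> 0\<close> by simp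
      qed
    qed
  qed
  moreover have "pos_def_mat S'"
    unfolding pos_def_mat_def
  proof (intro conjI allI impI)
    show "transpose S' = S'" using pd unfolding pos_def_mat_def S'_def
      by (auto simp: transpose_def vec_eq_iff)
    fix u :: "real^'n" assume "u \<noteq> 0"
    then have "u \<bullet> (S *v u) > 0" using pd unfolding pos_def_mat_def by auto
    moreover have "u \<bullet> (S' *v u) = u \<bullet> (S *v u) + a * (u $ j)\<^sup>2"
    proof -
      have "S' *v u = S *v u + (\<chi> k. if k = j then a * u $ j else 0)"
        unfolding S'_def by (simp add: matrix_vector_mult_def vec_eq_iff sum.distrib algebra_simps
            sum_delta_mult_l sum_delta_mult_r)
      then show ?thesis by (simp add: inner_add_right inner_vec_def distrib_left sum.distrib sum_delta_mult_r power2_eq_square)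
    qed
    moreover have "a * (u $ j)\<^sup>2 \<ge> 0" using a by simp
    ultimately show "u \<bullet> (S' *v u) > 0" by linarith
  qed
  ultimately show ?thesis by blast
qed

lemma SM_iter:
  fixes S P :: "real^'n^'n"
  assumes pd: "pos_def_mat S" and SP: "S ** P = mat 1" and PS: "P ** S = mat 1"
    and Z: "zmat_on J P" and F: "F \<subseteq> J" and a: "\<And>k. a k \<ge> 0"
  shows "pos_def_mat (S + diagm F a) \<and> (\<exists>P'. (S + diagm F a) ** P' = mat 1 \<and> P' ** (S + diagm F a) = mat 1 \<and> zmat_on J P')"
proof -
  have "finite F" by simp
  then show ?thesis using F
  proof (induction F rule: finite_induct)
    case empty
    have "diagm {} a = 0" unfolding diagm_def by (simp add: vec_eq_iff)
    then show ?case using pd SP PS Z by auto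
  next
    case (insert j F)
    then obtain P1 where P1: "(S + diagm F a) ** P1 = mat 1" "P1 ** (S + diagm F a) = mat 1" "zmat_on J P1"
      and pd1: "pos_def_mat (S + diagm F a)" by auto
    have eq: "S + diagm (insert j F) a = (S + diagm F a) + (\<chi> k l. if k = j \<and> l = j then a j else 0)"
      using insert(2) unfolding diagm_def by (auto simp: vec_eq_iff)
    show ?case unfolding eq
      by (rule SM_step[OF pd1 P1(1) P1(2) P1(3)]) (use insert a in auto)
  qed
qed

(* ---- P4 ---- *)
locale vecrv = prob_space +
  fixes V :: "'a \<Rightarrow> real^'k::finite"
  assumes L2V: "\<And>k. (\<lambda>\<omega>. V \<omega> $ k) \<in> L2 M"
begin

definition mu :: "'k \<Rightarrow> real" where "mu k = (\<integral>\<omega>. V \<omega> $ k \<partial>M)"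

abbreviation Sig :: "real^'k^'k" where "Sig \<equiv> covmat M V V"

lemma Sig_entry: "Sig $ k $ l = cov M (\<lambda>\<omega>. V \<omega> $ k) (\<lambda>\<omega>. V \<omega> $ l)"
  by (simp add: covmat_def)

lemma Sig_sym: "Sig $ k $ l = Sig $ l $ k"
  by (simp add: Sig_entry cov_sym)

lemma L2_linV: "(\<lambda>\<omega>. c + (\<Sum>k\<in>S. b k * V \<omega> $ k)) \<in> L2 M"
  by (rule L2_lin) (rule L2V)

lemma cov_linV:
  "cov M (\<lambda>\<omega>. c + (\<Sum>k\<in>S. b k * V \<omega> $ k)) (\<lambda>\<omega>. c' + (\<Sum>l\<in>T. b' l * V \<omega> $ l))
     = (\<Sum>k\<in>S. \<Sum>l\<in>T. b k * b' l * Sig $ k $ l)"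
proof -
  have "cov M (\<lambda>\<omega>. c + (\<Sum>k\<in>S. b k * V \<omega> $ k)) (\<lambda>\<omega>. c' + (\<Sum>l\<in>T. b' l * V \<omega> $ l))
      = (\<Sum>k\<in>S. b k * cov M (\<lambda>\<omega>. V \<omega> $ k) (\<lambda>\<omega>. c' + (\<Sum>l\<in>T. b' l * V \<omega> $ l)))"
    by (rule cov_lin_left) (auto intro: L2V L2_linV)
  also have "\<dots> = (\<Sum>k\<in>S. b k * (\<Sum>l\<in>T. b' l * Sig $ k $ l))"
    by (subst cov_lin_right) (auto intro: L2V simp: Sig_entry)
  finally show ?thesis by (simp add: sum_distrib_left mult.assoc)
qed

lemma cov_linV_single:
  "cov M (\<lambda>\<omega>. c + (\<Sum>k\<in>S. b k * V \<omega> $ k)) (\<lambda>\<omega>. V \<omega> $ l) = (\<Sum>k\<in>S. b k * Sig $ k $ l)"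
  by (subst cov_lin_left) (auto intro: L2V simp: Sig_entry)

lemma int_linV: "(\<integral>\<omega>. c + (\<Sum>k\<in>S. b k * V \<omega> $ k) \<partial>M) = c + (\<Sum>k\<in>S. b k * mu k)"
proof -
  have i: "\<And>k. integrable M (\<lambda>\<omega>. V \<omega> $ k)" using L2V L2_int by blast
  show ?thesis using i by (simp add: integral_sum int_const mu_def prob_space)
qed

lemma sum_if_UNIV: "(\<Sum>x\<in>(UNIV::'k set). if x \<in> B then g x else 0) = (sum g B :: real)"
proof -
  have "sum g B = sum g (UNIV \<inter> B)" by simp
  also have "\<dots> = (\<Sum>x\<in>(UNIV::'k set). if x \<in> B then g x else 0)"
    by (rule sum.inter_restrict) simp
  finally show ?thesis by simp
qed

lemma quad_restrict:
  "(\<Sum>k\<in>R. \<Sum>l\<in>R. b k * b l * Sig $ k $ l) = (\<chi> k. if k \<in> R then b k else 0) \<bullet> (Sig *v (\<chi> k. if k \<in> R then b k else 0))"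
proof -
  have "(\<chi> k. if k \<in> R then b k else 0) \<bullet> (Sig *v (\<chi> k. if k \<in> R then b k else 0))
     = (\<Sum>k\<in>UNIV. \<Sum>l\<in>UNIV. (if k \<in> R then b k else 0) * Sig $ k $ l * (if l \<in> R then b l else 0))"
    by (simp add: quad_form)
  also have "\<dots> = (\<Sum>k\<in>UNIV. if k \<in> R then (\<Sum>l\<in>UNIV. if l \<in> R then b k * b l * Sig $ k $ l else 0) else 0)"
    by (intro sum.cong refl) (auto simp: algebra_simps intro!: sum.cong)
  also have "\<dots> = (\<Sum>k\<in>R. \<Sum>l\<in>R. b k * b l * Sig $ k $ l)"
    by (simp only: sum_if_UNIV)
  finally show ?thesis by simp
qed

lemma quad_nonneg:
  assumes pd: "pos_def_mat Sig"
  shows "(\<Sum>k\<in>R. \<Sum>l\<in>R. b k * b l * Sig $ k $ l) \<ge> 0"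
    and "(\<Sum>k\<in>R. \<Sum>l\<in>R. b k * b l * Sig $ k $ l) = 0 \<Longrightarrow> \<forall>k\<in>R. b k = 0"
proof -
  define x where "x = (\<chi> k. if k \<in> R then b k else 0)"
  have q: "(\<Sum>k\<in>R. \<Sum>l\<in>R. b k * b l * Sig $ k $ l) = x \<bullet> (Sig *v x)"
    unfolding x_def by (rule quad_restrict)
  show "(\<Sum>k\<in>R. \<Sum>l\<in>R. b k * b l * Sig $ k $ l) \<ge> 0"
    unfolding q using pd unfolding pos_def_mat_def by (cases "x = 0") (auto intro: less_imp_le)
  assume "(\<Sum>k\<in>R. \<Sum>l\<in>R. b k * b l * Sig $ k $ l) = 0"
  then have "x = 0" unfolding q using pd unfolding pos_def_mat_def by (metis less_irrefl)
  then show "\<forall>k\<in>R. b k = 0" unfolding x_def by (auto simp: vec_eq_iff) (metis)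
qed

text \<open>Characterization of the population residual.\<close>
lemma resid_char:
  assumes pd: "pos_def_mat Sig"
    and rho: "\<And>\<omega>. rho \<omega> = V \<omega> $ i - cz - (\<Sum>k\<in>R. bz k * V \<omega> $ k)"
    and Erho: "(\<integral>\<omega>. rho \<omega> \<partial>M) = 0"
    and orth: "\<And>l. l \<in> R \<Longrightarrow> cov M rho (\<lambda>\<omega>. V \<omega> $ l) = 0"
  shows "\<exists>C. lin_resid M (\<lambda>\<omega>. V \<omega> $ i) V R = (\<lambda>\<omega>. rho \<omega> + C)"
proof -
  define Q where "Q = (\<lambda>c b. (\<integral>\<omega>. (V \<omega> $ i - c - (\<Sum>k\<in>R. b k * V \<omega> $ k))\<^sup>2 \<partial>M))"
  have rhoeq: "rho = (\<lambda>\<omega>. V \<omega> $ i - (cz + (\<Sum>k\<in>R. bz k * V \<omega> $ k)))"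
    using rho by (auto simp: algebra_simps)
  have rhoL2: "rho \<in> L2 M"
    unfolding rhoeq by (intro L2_diff L2V L2_linV)
  have decomp: "Q c b = Q cz bz + (\<Sum>k\<in>R. \<Sum>l\<in>R. (bz k - b k) * (bz l - b l) * Sig $ k $ l)
                 + (cz - c + (\<Sum>k\<in>R. (bz k - b k) * mu k))\<^sup>2" for c b
  proof -
    define L where "L = (\<lambda>\<omega>. (cz - c) + (\<Sum>k\<in>R. (bz k - b k) * V \<omega> $ k))"
    have LL2: "L \<in> L2 M" unfolding L_def by (rule L2_linV)
    have g: "(\<lambda>\<omega>. V \<omega> $ i - c - (\<Sum>k\<in>R. b k * V \<omega> $ k)) = (\<lambda>\<omega>. rho \<omega> + L \<omega>)"
      unfolding L_def rho by (auto simp: algebra_simps sum_subtractf left_diff_distrib)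
    have gL2: "(\<lambda>\<omega>. rho \<omega> + L \<omega>) \<in> L2 M" by (intro L2_add rhoL2 LL2)
    have Qcb: "Q c b = cov M (\<lambda>\<omega>. rho \<omega> + L \<omega>) (\<lambda>\<omega>. rho \<omega> + L \<omega>) + (\<integral>\<omega>. rho \<omega> + L \<omega> \<partial>M)\<^sup>2"
    proof -
      have g': "\<And>\<omega>. V \<omega> $ i - c - (\<Sum>k\<in>R. b k * V \<omega> $ k) = rho \<omega> + L \<omega>"
        using g by (rule fun_cong)
      have "Q c b = (\<integral>\<omega>. (rho \<omega> + L \<omega>)\<^sup>2 \<partial>M)" unfolding Q_def by (simp only: g')
      then show ?thesis using sq_int_eq[OF gL2] by simp
    qed
    have Q0: "Q cz bz = cov M rho rho + (\<integral>\<omega>. rho \<omega> \<partial>M)\<^sup>2"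
    proof -
      have "Q cz bz = (\<integral>\<omega>. (rho \<omega>)\<^sup>2 \<partial>M)" unfolding Q_def by (simp only: rho[symmetric])
      then show ?thesis using sq_int_eq[OF rhoL2] by simp
    qed
    have c1: "cov M rho L = 0"
      unfolding L_def by (subst cov_lin_right) (auto intro: L2V rhoL2 simp: orth)
    have c2: "cov M L L = (\<Sum>k\<in>R. \<Sum>l\<in>R. (bz k - b k) * (bz l - b l) * Sig $ k $ l)"
      unfolding L_def by (rule cov_linV)
    have cc: "cov M (\<lambda>\<omega>. rho \<omega> + L \<omega>) (\<lambda>\<omega>. rho \<omega> + L \<omega>) = cov M rho rho + cov M rho L + cov M L rho + cov M L L"
    proof -
      have "cov M (\<lambda>\<omega>. rho \<omega> + L \<omega>) (\<lambda>\<omega>. rho \<omega> + L \<omega>) = cov M rho (\<lambda>\<omega>. rho \<omega> + L \<omega>) + cov M L (\<lambda>\<omega>. rho \<omega> + L \<omega>)"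
        by (rule cov_add_left[OF rhoL2 LL2 gL2])
      also have "cov M rho (\<lambda>\<omega>. rho \<omega> + L \<omega>) = cov M rho rho + cov M rho L"
        by (rule cov_add_right[OF rhoL2 LL2 rhoL2])
      also have "cov M L (\<lambda>\<omega>. rho \<omega> + L \<omega>) = cov M L rho + cov M L L"
        by (rule cov_add_right[OF rhoL2 LL2 LL2])
      finally show ?thesis by simp
    qed
    have ii: "(\<integral>\<omega>. rho \<omega> + L \<omega> \<partial>M) = (\<integral>\<omega>. rho \<omega> \<partial>M) + (\<integral>\<omega>. L \<omega> \<partial>M)"
      by (rule Bochner_Integration.integral_add) (auto intro: L2_int rhoL2 LL2)
    have iL: "(\<integral>\<omega>. L \<omega> \<partial>M) = cz - c + (\<Sum>k\<in>R. (bz k - b k) * mu k)"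
      unfolding L_def by (rule int_linV)
    have c3: "cov M L rho = 0" using c1 by (simp add: cov_sym)
    show ?thesis
      unfolding Qcb Q0 cc ii iL Erho c2 c1 c3 by simp
  qed
  have ex: "\<exists>cb :: real \<times> ('k \<Rightarrow> real). \<forall>c' b'. Q (fst cb) (snd cb) \<le> Q c' b'"
  proof (intro exI[of _ "(cz, bz)"] allI)
    fix c' b'
    show "Q (fst (cz, bz)) (snd (cz, bz)) \<le> Q c' b'"
      using decomp[of c' b'] quad_nonneg(1)[OF pd, where R=R and b="\<lambda>k. bz k - b' k"] by (simp add: add_nonneg_nonneg)
  qed
  define cb where "cb = (SOME cb :: real \<times> ('k \<Rightarrow> real). \<forall>c' b'. Q (fst cb) (snd cb) \<le> Q c' b')"
  have cbmin: "\<forall>c' b'. Q (fst cb) (snd cb) \<le> Q c' b'"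
    unfolding cb_def by (rule someI_ex[OF ex])
  have "Q (fst cb) (snd cb) \<le> Q cz bz" using cbmin by blast
  then have "(\<Sum>k\<in>R. \<Sum>l\<in>R. (bz k - snd cb k) * (bz l - snd cb l) * Sig $ k $ l) = 0"
    using decomp[of "fst cb" "snd cb"] quad_nonneg(1)[OF pd, where R=R and b="\<lambda>k. bz k - snd cb k"]
      zero_le_power2[of "cz - fst cb + (\<Sum>k\<in>R. (bz k - snd cb k) * mu k)"] by linarith
  then have eqb: "\<forall>k\<in>R. snd cb k = bz k"
    using quad_nonneg(2)[OF pd, where R=R and b="\<lambda>k. bz k - snd cb k"] by simp
  have lr: "lin_resid M (\<lambda>\<omega>. V \<omega> $ i) V R = (\<lambda>\<omega>. V \<omega> $ i - fst cb - (\<Sum>k\<in>R. snd cb k * V \<omega> $ k))"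
    unfolding lin_resid_def Let_def cb_def Q_def by simp
  show ?thesis
  proof (intro exI[of _ "cz - fst cb"])
    show "lin_resid M (\<lambda>\<omega>. V \<omega> $ i) V R = (\<lambda>\<omega>. rho \<omega> + (cz - fst cb))"
      unfolding lr using eqb by (auto simp: rho intro!: sum.cong)
  qed
qed

lemma bilin_form: "(\<Sum>k\<in>UNIV. \<Sum>l\<in>UNIV. x $ k * y $ l * S $ k $ l) = x \<bullet> (S *v y)"
  by (simp add: inner_vec_def matrix_vector_mult_def sum_distrib_left algebra_simps)

lemma sum_UNIV_two: assumes "i \<noteq> j"
  shows "(\<Sum>k\<in>(UNIV::'k set). f k) = f i + f j + (\<Sum>k\<in>UNIV - {i, j}. (f k :: real))"
proof -
  have "(\<Sum>k\<in>(UNIV::'k set). f k) = f i + (\<Sum>k\<in>UNIV - {i}. f k)"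
    by (rule sum.remove) auto
  also have "(\<Sum>k\<in>UNIV - {i}. f k) = f j + (\<Sum>k\<in>UNIV - {i} - {j}. f k)"
    by (rule sum.remove) (use assms in auto)
  also have "UNIV - {i} - {j} = UNIV - {i, j}" by auto
  finally show ?thesis by simp
qed

lemma cov_shift: assumes "f \<in> L2 M" "g \<in> L2 M"
  shows "cov M (\<lambda>\<omega>. f \<omega> + a) (\<lambda>\<omega>. g \<omega> + b) = cov M f g"
proof -
  have "cov M (\<lambda>\<omega>. f \<omega> + a) (\<lambda>\<omega>. g \<omega> + b) = cov M f (\<lambda>\<omega>. g \<omega> + b) + cov M (\<lambda>\<omega>. a) (\<lambda>\<omega>. g \<omega> + b)"
    by (rule cov_add_left) (auto intro: assms L2_const L2_add)
  also have "cov M f (\<lambda>\<omega>. g \<omega> + b) = cov M f g + cov M f (\<lambda>\<omega>. b)"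
    by (rule cov_add_right) (auto intro: assms L2_const)
  finally show ?thesis by (simp add: cov_const_left cov_const_right)
qed

lemma sym_inv: assumes pd: "pos_def_mat Sig" and SP: "Sig ** P = mat 1" and PS: "P ** Sig = mat 1"
  shows "P $ a $ b = P $ b $ a"
proof -
  have ST: "transpose Sig = Sig" using pd unfolding pos_def_mat_def by simp
  have "transpose P ** Sig = mat 1"
    using arg_cong[OF SP, of transpose] by (simp add: matrix_transpose_mul ST)
  then have "transpose P = transpose P ** (Sig ** P)" using SP by simp
  also have "\<dots> = P" using \<open>transpose P ** Sig = mat 1\<close> by (simp add: matrix_mul_assoc)
  finally have "transpose P = P" .
  then show ?thesis by (metis transpose_def vec_lambda_beta)
qed

definition linw :: "real^'k \<Rightarrow> 'a \<Rightarrow> real" where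
  "linw w = (\<lambda>\<omega>. (- (\<Sum>k\<in>UNIV. w $ k * mu k)) + (\<Sum>k\<in>UNIV. w $ k * V \<omega> $ k))"

lemma linw_L2: "linw w \<in> L2 M" unfolding linw_def by (rule L2_linV)

lemma linw_int: "(\<integral>\<omega>. linw w \<omega> \<partial>M) = 0"
  unfolding linw_def by (simp only: int_linV)

lemma linw_cov: "cov M (linw w) (linw w') = w \<bullet> (Sig *v w')"
  unfolding linw_def cov_linV by (rule bilin_form)

lemma linw_cov_single: "cov M (linw w) (\<lambda>\<omega>. V \<omega> $ l) = (Sig *v w) $ l"
  unfolding linw_def cov_linV_single by (simp add: matrix_vector_mult_def Sig_sym[of _ l] mult.commute)

lemma linw_form: assumes "i \<noteq> j" "w $ i = 1" "w $ j = 0"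
  shows "linw w \<omega> = V \<omega> $ i - (\<Sum>k\<in>UNIV. w $ k * mu k) - (\<Sum>k\<in>UNIV - {i, j}. (- w $ k) * V \<omega> $ k)"
  unfolding linw_def using assms by (simp add: sum_UNIV_two[OF assms(1), of "\<lambda>k. w $ k * V \<omega> $ k"] sum_negf)

lemma pcorr_sign:
  assumes pd: "pos_def_mat Sig" and SP: "Sig ** P = mat 1" and PS: "P ** Sig = mat 1"
    and ij: "i \<noteq> j" and pc: "partial_corr M V i j > 0"
  shows "P $ i $ j < 0"
proof -
  have sym: "\<And>a b. P $ a $ b = P $ b $ a" by (rule sym_inv[OF pd SP PS])
  define col where "col a = P *v axis a (1::real)" for a
  have colc: "col a $ k = P $ k $ a" for a k unfolding col_def by (simp add: mv_axis)
  have Scol: "Sig *v col a = axis a 1" for a unfolding col_def using SP by (simp add: matrix_vector_mul_assoc)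
  define dt where "dt = P $ i $ i * P $ j $ j - P $ i $ j * P $ i $ j"
  define vi where "vi = P $ j $ j *\<^sub>R col i - P $ i $ j *\<^sub>R col j"
  define vj where "vj = P $ i $ i *\<^sub>R col j - P $ j $ i *\<^sub>R col i"
  have Svi: "Sig *v vi = P $ j $ j *\<^sub>R axis i 1 - P $ i $ j *\<^sub>R axis j 1"
    unfolding vi_def by (simp add: matrix_vector_mult_diff_distrib matrix_vector_mult_scaleR Scol)
  have Svj: "Sig *v vj = P $ i $ i *\<^sub>R axis j 1 - P $ j $ i *\<^sub>R axis i 1"
    unfolding vj_def by (simp add: matrix_vector_mult_diff_distrib matrix_vector_mult_scaleR Scol)
  have vii: "vi $ i = dt" and vij: "vi $ j = 0" unfolding vi_def dt_def using sym[of i j] sym[of j i]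
    by (auto simp: colc algebra_simps)
  have vjj: "vj $ j = dt" and vji: "vj $ i = 0" unfolding vj_def dt_def using sym[of i j]
    by (auto simp: colc algebra_simps)
  have Pjj: "P $ j $ j > 0" by (rule pd_inv_diag_pos[OF pd SP])
  have "vi \<noteq> 0"
  proof
    assume "vi = 0"
    then have "(Sig *v vi) $ i = 0" by simp
    then show False using Svi Pjj ij by (simp add: axis_nth1)
  qed
  then have "vi \<bullet> (Sig *v vi) > 0" using pd unfolding pos_def_mat_def by auto
  moreover have "vi \<bullet> (Sig *v vi) = P $ j $ j * dt"
    unfolding Svi using ij by (simp add: inner_diff_right inner_axis1 vii vij)
  ultimately have dt: "dt > 0" using Pjj by (simp add: zero_less_mult_iff)
  define wi where "wi = (1/dt) *\<^sub>R vi"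
  define wj where "wj = (1/dt) *\<^sub>R vj"
  have wii: "wi $ i = 1" and wij: "wi $ j = 0" unfolding wi_def using vii vij dt by auto
  have wjj: "wj $ j = 1" and wji: "wj $ i = 0" unfolding wj_def using vjj vji dt by auto
  define R where "R = UNIV - {i, j}"
  have Swi: "(Sig *v wi) $ l = 0" if "l \<in> R" for l
    using that unfolding wi_def R_def by (auto simp: matrix_vector_mult_scaleR Svi axis_nth1)
  have Swj: "(Sig *v wj) $ l = 0" if "l \<in> R" for l
    using that unfolding wj_def R_def by (auto simp: matrix_vector_mult_scaleR Svj axis_nth1)
  have R': "R = UNIV - {j, i}" unfolding R_def by auto
  have fi: "\<And>\<omega>. linw wi \<omega> = V \<omega> $ i - (\<Sum>k\<in>UNIV. wi $ k * mu k) - (\<Sum>k\<in>R. (- wi $ k) * V \<omega> $ k)"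
    unfolding R_def by (rule linw_form[OF ij wii wij])
  have fj: "\<And>\<omega>. linw wj \<omega> = V \<omega> $ j - (\<Sum>k\<in>UNIV. wj $ k * mu k) - (\<Sum>k\<in>R. (- wj $ k) * V \<omega> $ k)"
    unfolding R' by (rule linw_form[OF ij[symmetric] wjj wji])
  have oi: "\<And>l. l \<in> R \<Longrightarrow> cov M (linw wi) (\<lambda>\<omega>. V \<omega> $ l) = 0"
    by (simp add: linw_cov_single Swi)
  have oj: "\<And>l. l \<in> R \<Longrightarrow> cov M (linw wj) (\<lambda>\<omega>. V \<omega> $ l) = 0"
    by (simp add: linw_cov_single Swj)
  obtain Ci where Ci: "lin_resid M (\<lambda>\<omega>. V \<omega> $ i) V R = (\<lambda>\<omega>. linw wi \<omega> + Ci)"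
    using resid_char[OF pd fi linw_int oi] by blast
  obtain Cj where Cj: "lin_resid M (\<lambda>\<omega>. V \<omega> $ j) V R = (\<lambda>\<omega>. linw wj \<omega> + Cj)"
    using resid_char[OF pd fj linw_int oj] by blast
  have num: "cov M (lin_resid M (\<lambda>\<omega>. V \<omega> $ i) V R) (lin_resid M (\<lambda>\<omega>. V \<omega> $ j) V R) = - P $ i $ j / dt"
  proof -
    have "cov M (lin_resid M (\<lambda>\<omega>. V \<omega> $ i) V R) (lin_resid M (\<lambda>\<omega>. V \<omega> $ j) V R) = cov M (linw wi) (linw wj)"
      unfolding Ci Cj by (rule cov_shift[OF linw_L2 linw_L2])
    also have "\<dots> = wi \<bullet> (Sig *v wj)" by (rule linw_cov)
    also have "\<dots> = (1/dt) * (1/dt) * (vi \<bullet> (Sig *v vj))"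
      unfolding wi_def wj_def by (simp add: matrix_vector_mult_scaleR)
    also have "vi \<bullet> (Sig *v vj) = - P $ j $ i * dt"
      unfolding Svj using ij by (simp add: inner_diff_right inner_axis1 vii vij)
    finally show ?thesis using dt sym[of i j] by (simp add: field_simps)
  qed
  have varnn: "cov M (linw w) (linw w) \<ge> 0" for w
    unfolding linw_cov using pd unfolding pos_def_mat_def by (cases "w = 0") (auto intro: less_imp_le)
  have vi0: "cov M (lin_resid M (\<lambda>\<omega>. V \<omega> $ i) V R) (lin_resid M (\<lambda>\<omega>. V \<omega> $ i) V R) \<ge> 0"
    unfolding Ci using cov_shift[OF linw_L2 linw_L2] varnn by simp
  have vj0: "cov M (lin_resid M (\<lambda>\<omega>. V \<omega> $ j) V R) (lin_resid M (\<lambda>\<omega>. V \<omega> $ j) V R) \<ge> 0"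
    unfolding Cj using cov_shift[OF linw_L2 linw_L2] varnn by simp
  have sq0: "sqrt (cov M (lin_resid M (\<lambda>\<omega>. V \<omega> $ i) V R) (lin_resid M (\<lambda>\<omega>. V \<omega> $ i) V R)
     * cov M (lin_resid M (\<lambda>\<omega>. V \<omega> $ j) V R) (lin_resid M (\<lambda>\<omega>. V \<omega> $ j) V R)) \<ge> 0"
    using vi0 vj0 by simp
  show ?thesis
  proof (rule ccontr)
    assume "\<not> P $ i $ j < 0"
    then have "- P $ i $ j / dt \<le> 0" using dt by (simp add: divide_nonpos_pos)
    then have "partial_corr M V i j \<le> 0"
      unfolding partial_corr_def corr_def R_def[symmetric] num
      using sq0 by (rule divide_nonpos_nonneg)
    then show False using pc by simp
  qed
qed

end

(* ---- P5 ---- *)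
lemma quad_zero:
  fixes A B :: real
  assumes H: "\<And>t. 0 \<le> - (t * A) + t\<^sup>2 * B"
  shows "A = 0"
proof (rule ccontr)
  assume A: "A \<noteq> 0"
  define t where "t = A / (\<bar>B\<bar> + 1)"
  have d: "\<bar>B\<bar> + 1 > 0" by simp
  have tA: "t * A = A\<^sup>2 / (\<bar>B\<bar> + 1)" unfolding t_def by (simp add: power2_eq_square)
  have tA0: "t * A > 0" unfolding tA using A d by simp
  have t2: "t\<^sup>2 = (t * A) / (\<bar>B\<bar> + 1)" unfolding t_def by (simp add: power2_eq_square)
  have "t\<^sup>2 * B \<le> t\<^sup>2 * \<bar>B\<bar>" by (intro mult_left_mono) auto
  also have "\<dots> = (t * A) * (\<bar>B\<bar> / (\<bar>B\<bar> + 1))" unfolding t2 by simp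
  also have "\<dots> < (t * A) * 1"
    using tA0 d by (intro mult_strict_left_mono) auto
  finally have "- (t * A) + t\<^sup>2 * B < 0" by simp
  then show False using H[of t] by simp
qed

lemma sum_Plus_UNIV: "(\<Sum>x\<in>(UNIV::('a::finite + 'b::finite) set). f x) = (\<Sum>i\<in>UNIV. f (Inl i)) + (\<Sum>j\<in>UNIV. (f (Inr j) :: 'c::comm_monoid_add))"
proof -
  have "(\<Sum>x\<in>(UNIV::('a + 'b) set). f x) = (\<Sum>x\<in>(UNIV <+> UNIV). f x)" by simp
  also have "\<dots> = (\<Sum>i\<in>UNIV. f (Inl i)) + (\<Sum>j\<in>UNIV. f (Inr j))"
    by (subst sum.Plus) (auto simp: comp_def)
  finally show ?thesis .
qed

lemma stack_Inl[simp]: "stack u v $ Inl i = u $ i" by (simp add: stack_def)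
lemma stack_Inr[simp]: "stack u v $ Inr j = v $ j" by (simp add: stack_def)

lemma inner_stack: "stack u v \<bullet> stack u' v' = u \<bullet> u' + v \<bullet> v'"
  by (simp add: inner_vec_def sum_Plus_UNIV)

lemma stack_split: "b = stack (\<chi> i. b $ Inl i) (\<chi> j. b $ Inr j)"
  by (simp add: vec_eq_iff stack_def split: sum.split)

lemma stack_diff: "stack u v - stack u' v' = stack (u - u') (v - v')"
  by (simp add: vec_eq_iff stack_def split: sum.split)

lemma stack_eq0: "stack u v = 0 \<longleftrightarrow> u = 0 \<and> v = 0"
  by (auto simp: vec_eq_iff stack_def split: sum.split)

definition m1 :: "real^'n^'m \<Rightarrow> real" where
  "m1 M = (\<Sum>i\<in>UNIV. \<Sum>j\<in>UNIV. \<bar>M $ i $ j\<bar>)"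

lemma m1_nonneg: "m1 M \<ge> 0" unfolding m1_def by (simp add: sum_nonneg)

lemma norm_mv_le: "norm (M *v x) \<le> m1 M * norm x"
proof -
  have "norm (M *v x) \<le> (\<Sum>i\<in>UNIV. \<bar>(M *v x) $ i\<bar>)" by (rule norm_le_l1_cart)
  also have "\<dots> \<le> (\<Sum>i\<in>UNIV. \<Sum>j\<in>UNIV. \<bar>M $ i $ j\<bar> * norm x)"
  proof (rule sum_mono)
    fix i
    have "\<bar>(M *v x) $ i\<bar> = \<bar>\<Sum>j\<in>UNIV. M $ i $ j * x $ j\<bar>" by (simp add: matrix_vector_mult_def)
    also have "\<dots> \<le> (\<Sum>j\<in>UNIV. \<bar>M $ i $ j * x $ j\<bar>)" by (rule sum_abs)
    also have "\<dots> \<le> (\<Sum>j\<in>UNIV. \<bar>M $ i $ j\<bar> * norm x)"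
      by (intro sum_mono) (simp add: abs_mult mult_left_mono component_le_norm_cart)
    finally show "\<bar>(M *v x) $ i\<bar> \<le> (\<Sum>j\<in>UNIV. \<bar>M $ i $ j\<bar> * norm x)" .
  qed
  also have "\<dots> = m1 M * norm x" unfolding m1_def by (simp add: sum_distrib_right)
  finally show ?thesis .
qed

lemma m1_le_norm: "m1 (M::real^'n^'m) \<le> real CARD('m) * real CARD('n) * norm M"
proof -
  have "m1 M \<le> (\<Sum>i\<in>(UNIV::'m set). \<Sum>j\<in>(UNIV::'n set). norm M)"
    unfolding m1_def
  proof (intro sum_mono)
    fix i j
    have "\<bar>M $ i $ j\<bar> \<le> norm (M $ i)" by (rule component_le_norm_cart)
    also have "\<dots> \<le> norm M" by (rule Finite_Cartesian_Product.norm_nth_le)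
    finally show "\<bar>M $ i $ j\<bar> \<le> norm M" .
  qed
  then show ?thesis by simp
qed

lemma norm_Inr_le: "norm (y :: real^'d) \<le> real CARD('d) * norm (stack (x::real^'p) y)"
proof -
  have "norm y \<le> (\<Sum>j\<in>UNIV. \<bar>y $ j\<bar>)" by (rule norm_le_l1_cart)
  also have "\<dots> \<le> (\<Sum>j\<in>(UNIV::'d set). norm (stack x y))"
    by (intro sum_mono) (metis stack_Inr component_le_norm_cart)
  finally show ?thesis by simp
qed

lemma ols_normal:
  fixes y :: "nat \<Rightarrow> real" and v :: "nat \<Rightarrow> real^'k" and az :: real and bz :: "real^'k"
  assumes min: "\<And>a b. (\<Sum>i<N. (y i - az - v i \<bullet> bz)\<^sup>2) \<le> (\<Sum>i<N. (y i - a - v i \<bullet> b)\<^sup>2)"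
    and N: "N > 0"
  shows "(\<chi> k l. (\<Sum>i<N. v i $ k * v i $ l) / real N - ((\<Sum>i<N. v i $ k * 1) / real N) * ((\<Sum>i<N. v i $ l * 1) / real N)) *v bz
       = (\<chi> k. (\<Sum>i<N. v i $ k * y i) / real N - ((\<Sum>i<N. v i $ k * 1) / real N) * ((\<Sum>i<N. y i * 1) / real N))"
proof -
  define r where "r i = y i - az - v i \<bullet> bz" for i
  have foc: "(\<Sum>i<N. r i * (h0 + v i \<bullet> h)) = 0" for h0 h
  proof -
    have "0 \<le> - (t * (2 * (\<Sum>i<N. r i * (h0 + v i \<bullet> h)))) + t\<^sup>2 * (\<Sum>i<N. (h0 + v i \<bullet> h)\<^sup>2)" for t
    proof -
      have "(\<Sum>i<N. (y i - (az + t * h0) - v i \<bullet> (bz + t *\<^sub>R h))\<^sup>2)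
          = (\<Sum>i<N. (r i - t * (h0 + v i \<bullet> h))\<^sup>2)"
        unfolding r_def by (intro sum.cong refl) (simp add: inner_add_right algebra_simps)
      also have "\<dots> = (\<Sum>i<N. (r i)\<^sup>2 - t * (2 * (r i * (h0 + v i \<bullet> h))) + t\<^sup>2 * (h0 + v i \<bullet> h)\<^sup>2)"
        by (intro sum.cong refl) (simp add: power2_eq_square algebra_simps)
      also have "\<dots> = (\<Sum>i<N. (r i)\<^sup>2) - t * (2 * (\<Sum>i<N. r i * (h0 + v i \<bullet> h))) + t\<^sup>2 * (\<Sum>i<N. (h0 + v i \<bullet> h)\<^sup>2)"
        by (simp add: sum.distrib sum_subtractf sum_distrib_left)
      finally show ?thesis using min[of "az + t * h0" "bz + t *\<^sub>R h"] unfolding r_def by simp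
    qed
    then have "2 * (\<Sum>i<N. r i * (h0 + v i \<bullet> h)) = 0" by (rule quad_zero)
    then show ?thesis by simp
  qed
  have s1: "(\<Sum>i<N. r i) = 0" using foc[of 1 0] by simp
  have s2: "(\<Sum>i<N. r i * v i $ k) = 0" for k using foc[of 0 "axis k 1"] by (simp add: inner_axis1 mult.commute)
  have yv: "y i = r i + az + v i \<bullet> bz" for i unfolding r_def by simp
  show ?thesis
  proof (subst vec_eq_iff, intro allI)
    fix k
    have lhs: "((\<chi> k l. (\<Sum>i<N. v i $ k * v i $ l) / real N - ((\<Sum>i<N. v i $ k * 1) / real N) * ((\<Sum>i<N. v i $ l * 1) / real N)) *v bz) $ k
      = (\<Sum>i<N. v i $ k * (v i \<bullet> bz)) / real N - ((\<Sum>i<N. v i $ k) / real N) * ((\<Sum>i<N. v i \<bullet> bz) / real N)"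
      by (simp add: matrix_vector_mult_def inner_vec_def sum_divide_distrib sum_subtractf sum_distrib_left
          sum_distrib_right algebra_simps sum.swap[of _ "UNIV"])
    have "(\<Sum>i<N. v i $ k * y i) = (\<Sum>i<N. v i $ k * r i) + az * (\<Sum>i<N. v i $ k) + (\<Sum>i<N. v i $ k * (v i \<bullet> bz))"
      unfolding yv by (simp add: algebra_simps sum.distrib sum_distrib_left)
    moreover have "(\<Sum>i<N. y i) = (\<Sum>i<N. r i) + real N * az + (\<Sum>i<N. v i \<bullet> bz)"
      unfolding yv by (simp add: sum.distrib)
    ultimately have rhs: "(\<Sum>i<N. v i $ k * y i) / real N - ((\<Sum>i<N. v i $ k * 1) / real N) * ((\<Sum>i<N. y i * 1) / real N)
       = (\<Sum>i<N. v i $ k * (v i \<bullet> bz)) / real N - ((\<Sum>i<N. v i $ k) / real N) * ((\<Sum>i<N. v i \<bullet> bz) / real N)"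
      using s1 s2[of k] N by (simp add: field_simps mult.commute)
    show "((\<chi> k l. (\<Sum>i<N. v i $ k * v i $ l) / real N - ((\<Sum>i<N. v i $ k * 1) / real N) * ((\<Sum>i<N. v i $ l * 1) / real N)) *v bz) $ k
      = (\<chi> k. (\<Sum>i<N. v i $ k * y i) / real N - ((\<Sum>i<N. v i $ k * 1) / real N) * ((\<Sum>i<N. y i * 1) / real N)) $ k"
      unfolding lhs using rhs by simp
  qed
qed

(* ---- P6 ---- *)
lemma block_mv:
  fixes S :: "real^('p::finite + 'd::finite)^('p + 'd)"
  assumes "\<And>k l. S $ Inl k $ Inl l = A $ k $ l" "\<And>k j. S $ Inl k $ Inr j = B $ k $ j"
    "\<And>j k. S $ Inr j $ Inl k = B' $ j $ k" "\<And>j j'. S $ Inr j $ Inr j' = G $ j $ j'"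
  shows "S *v stack x y = stack (A *v x + B *v y) (B' *v x + G *v y)"
  unfolding vec_eq_iff
proof
  fix m :: "'p + 'd"
  show "(S *v stack x y) $ m = stack (A *v x + B *v y) (B' *v x + G *v y) $ m"
    by (cases m) (simp_all add: matrix_vector_mult_def sum_Plus_UNIV assms)
qed

lemma block_mm_Inr:
  fixes Q S :: "real^('p::finite + 'd::finite)^('p + 'd)"
  shows "(Q ** S) $ Inr j $ m = ((\<chi> j k. Q $ Inr j $ Inl k) ** (\<chi> k m. S $ Inl k $ m)
            + (\<chi> j j'. Q $ Inr j $ Inr j') ** (\<chi> j' m. S $ Inr j' $ m)) $ j $ m"
  by (simp add: mat_mult_entry sum_Plus_UNIV)

lemma mat_neg_mult: "(- X) ** (Y::real^'n^'m) = - ((X::real^'m^'k) ** Y)"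
  by (simp add: vec_eq_iff matrix_matrix_mult_def sum_negf)

lemma mat_mult_diff: "(X::real^'m^'k) ** ((Y::real^'n^'m) - Z) = X ** Y - X ** Z"
  by (simp add: vec_eq_iff matrix_matrix_mult_def sum_subtractf algebra_simps)

lemma quad_diagm:
  fixes S :: "real^'n^'n"
  shows "u \<bullet> ((S + diagm F a) *v u) = u \<bullet> (S *v u) + (\<Sum>k\<in>F. a k * (u $ k)\<^sup>2)"
proof -
  have "(diagm F a *v u) = (\<chi> k. if k \<in> F then a k * u $ k else 0)"
    by (simp add: diagm_def vec_eq_iff matrix_vector_mult_def if_distrib if_distribR sum_delta_mult_l
        cong: if_cong)
  then have "u \<bullet> (diagm F a *v u) = (\<Sum>k\<in>UNIV. if k \<in> F then a k * (u $ k)\<^sup>2 else 0)"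
    by (simp add: inner_vec_def if_distrib power2_eq_square algebra_simps cong: if_cong)
  also have "\<dots> = (\<Sum>k\<in>F. a k * (u $ k)\<^sup>2)"
    by (simp add: sum.inter_restrict[symmetric])
  finally show ?thesis by (simp add: matrix_vector_mult_add_rdistrib inner_add_right)
qed

lemma meas_comp_cont:
  assumes "T \<in> borel_measurable M" "continuous_on UNIV g"
  shows "(\<lambda>\<omega>. g (T \<omega>)) \<in> borel_measurable M"
  by (rule measurable_compose[OF assms(1) borel_measurable_continuous_onI[OF assms(2)]])

(* ---- P7 ---- *)
lemma gen_sub:
  assumes f: "f \<in> borel_measurable borel"
  shows "sigma_sets (space M) {(\<lambda>\<omega>. f (E \<omega>)) -` A \<inter> space M | A. A \<in> sets (borel :: real measure)}
       \<subseteq> sigma_sets (space M) {E -` A \<inter> space M | A. A \<in> sets (borel :: ('x::topological_space) measure)}"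
proof (rule sigma_sets_mono, safe)
  fix A :: "real set" assume A: "A \<in> sets borel"
  have "(\<lambda>\<omega>. f (E \<omega>)) -` A \<inter> space M = E -` (f -` A \<inter> space borel) \<inter> space M" by auto
  moreover have "f -` A \<inter> space borel \<in> sets (borel :: 'x measure)" using measurable_sets[OF f A] .
  ultimately show "(\<lambda>\<omega>. f (E \<omega>)) -` A \<inter> space M \<in> sigma_sets (space M) {E -` A \<inter> space M | A. A \<in> sets (borel :: 'x measure)}"
    by (auto intro!: sigma_sets.Basic)
qed

lemma indep_from_vimage:
  fixes E :: "'s \<Rightarrow> 'x::topological_space" and T :: "'s \<Rightarrow> 'y::topological_space"
    and f :: "'x \<Rightarrow> real" and g :: "'y \<Rightarrow> real"
  assumes P: "prob_space M"
    and ind: "prob_space.indep_set M (sets (vimage_algebra (space M) E borel)) (sets (vimage_algebra (space M) T borel))"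
    and mE: "E \<in> borel_measurable M" and mT: "T \<in> borel_measurable M"
    and f: "f \<in> borel_measurable borel" and g: "g \<in> borel_measurable borel"
    and iE: "integrable M (\<lambda>\<omega>. f (E \<omega>))" and iT: "integrable M (\<lambda>\<omega>. g (T \<omega>))"
  shows "(\<integral>\<omega>. f (E \<omega>) * g (T \<omega>) \<partial>M) = (\<integral>\<omega>. f (E \<omega>) \<partial>M) * (\<integral>\<omega>. g (T \<omega>) \<partial>M)"
proof -
  interpret prob_space M by (rule P)
  have "indep_set (sigma_sets (space M) {(\<lambda>\<omega>. f (E \<omega>)) -` A \<inter> space M | A. A \<in> sets borel})
                  (sigma_sets (space M) {(\<lambda>\<omega>. g (T \<omega>)) -` A \<inter> space M | A. A \<in> sets borel})"
    using ind unfolding indep_set_def sets_vimage_algebra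
    by (rule indep_sets_mono_sets) (auto split: bool.split intro!: gen_sub f g)
  then have "indep_var borel (\<lambda>\<omega>. f (E \<omega>)) borel (\<lambda>\<omega>. g (T \<omega>))"
    unfolding indep_var_eq
    using measurable_compose[OF mE f] measurable_compose[OF mT g] by auto
  then show ?thesis by (rule indep_var_lebesgue_integral[OF _ iE iT])
qed

(* ---- main ---- *)
theorem theorem1:
  fixes M :: "'s measure"
    and Y :: "'s \<Rightarrow> real" and Z :: "'s \<Rightarrow> real^'p::finite"
    and X :: "'s \<Rightarrow> real^'d::finite" and W :: "'s \<Rightarrow> real^'d"
    and Ys :: "nat \<Rightarrow> 's \<Rightarrow> real" and Zs :: "nat \<Rightarrow> 's \<Rightarrow> real^'p"
    and Xs :: "nat \<Rightarrow> 's \<Rightarrow> real^'d" and Ws :: "nat \<Rightarrow> 's \<Rightarrow> real^'d"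
    and A :: "real^'p^'p" and B C :: "real^'d^'p" and D F G :: "real^'d^'d"
    and \<alpha> :: real and \<beta>Z :: "real^'p" and \<beta>X :: "real^'d"
    and ahat :: "nat \<Rightarrow> 's \<Rightarrow> real" and bZhat :: "nat \<Rightarrow> 's \<Rightarrow> real^'p"
    and bXhat :: "nat \<Rightarrow> 's \<Rightarrow> real^'d"
    and a :: "'d \<Rightarrow> real"
  assumes prob: "prob_space M"
    \<comment> \<open>random variables with finite second moments\<close>
    and meas_pop: "(\<lambda>\<omega>. (Y \<omega>, Z \<omega>, X \<omega>, W \<omega>)) \<in> borel_measurable M"
    and sq_int: "\<forall>f\<in>coords. integrable M (\<lambda>\<omega>. (f (Y \<omega>, Z \<omega>, X \<omega>, W \<omega>))\<^sup>2)"
    \<comment> \<open>covariance blocks\<close>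
    and A_def: "A = covmat M Z Z" and B_def: "B = covmat M Z X" and C_def: "C = covmat M Z W"
    and D_def: "D = covmat M X X" and F_def: "F = covmat M X W" and G_def: "G = covmat M W W"
    \<comment> \<open>population least-squares coefficients\<close>
    and pop_ls: "\<forall>a' bZ bX. (\<integral>\<omega>. (1/2) * (Y \<omega> - \<alpha> - Z \<omega> \<bullet> \<beta>Z - X \<omega> \<bullet> \<beta>X)\<^sup>2 \<partial>M)
                     \<le> (\<integral>\<omega>. (1/2) * (Y \<omega> - a' - Z \<omega> \<bullet> bZ - X \<omega> \<bullet> bX)\<^sup>2 \<partial>M)"
    \<comment> \<open>(i) identically distributed samples, sample moments converge in probability\<close>
    and meas_smp: "\<forall>i. (\<lambda>\<omega>. (Ys i \<omega>, Zs i \<omega>, Xs i \<omega>, Ws i \<omega>)) \<in> borel_measurable M"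
    and ident: "\<forall>i. distr M borel (\<lambda>\<omega>. (Ys i \<omega>, Zs i \<omega>, Xs i \<omega>, Ws i \<omega>))
                  = distr M borel (\<lambda>\<omega>. (Y \<omega>, Z \<omega>, X \<omega>, W \<omega>))"
    and moments: "\<forall>f\<in>coords. \<forall>g\<in>coords.
        conv_in_prob M
          (\<lambda>N \<omega>. (\<Sum>i<N. f (Ys i \<omega>, Zs i \<omega>, Xs i \<omega>, Ws i \<omega>) * g (Ys i \<omega>, Zs i \<omega>, Xs i \<omega>, Ws i \<omega>)) / real N)
          (\<integral>\<omega>. f (Y \<omega>, Z \<omega>, X \<omega>, W \<omega>) * g (Y \<omega>, Z \<omega>, X \<omega>, W \<omega>) \<partial>M)"
    \<comment> \<open>(ii) errors uncorrelated with measurement errors\<close>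
    and uncorr: "\<forall>i j. cov M (\<lambda>\<omega>. Ys i \<omega> - \<alpha> - Zs i \<omega> \<bullet> \<beta>Z - Xs i \<omega> \<bullet> \<beta>X)
                          (\<lambda>\<omega>. (Ws i \<omega> - Xs i \<omega>) $ j) = 0"
    \<comment> \<open>(iii) positive definite covariance matrices of (Z,W) and (Z,X)\<close>
    and pd_ZW: "pos_def_mat (covmat M (\<lambda>\<omega>. stack (Z \<omega>) (W \<omega>)) (\<lambda>\<omega>. stack (Z \<omega>) (W \<omega>)))"
    and pd_ZX: "pos_def_mat (covmat M (\<lambda>\<omega>. stack (Z \<omega>) (X \<omega>)) (\<lambda>\<omega>. stack (Z \<omega>) (X \<omega>)))"
    \<comment> \<open>OLS of Y_i on intercept, Z_i, W_i using the first N samples\<close>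
    and ols: "\<forall>N \<omega> a' bZ bW.
        (\<Sum>i<N. (Ys i \<omega> - ahat N \<omega> - Zs i \<omega> \<bullet> bZhat N \<omega> - Ws i \<omega> \<bullet> bXhat N \<omega>)\<^sup>2)
          \<le> (\<Sum>i<N. (Ys i \<omega> - a' - Zs i \<omega> \<bullet> bZ - Ws i \<omega> \<bullet> bW)\<^sup>2)"
    \<comment> \<open>Pairwise partial PC+\<close>
    and ppc: "\<forall>j j'. j \<noteq> j' \<longrightarrow>
        partial_corr M (\<lambda>\<omega>. stack (Z \<omega>) (X \<omega>)) (Inr j) (Inr j') > 0"
    \<comment> \<open>CUME: W = X + E, E independent of (Z,X,Y), Cov(E) = diag(a)\<close>
    and indepE: "prob_space.indep_set M
        (sets (vimage_algebra (space M) (\<lambda>\<omega>. W \<omega> - X \<omega>) borel))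
        (sets (vimage_algebra (space M) (\<lambda>\<omega>. (Z \<omega>, X \<omega>, Y \<omega>)) borel))"
    and covE: "covmat M (\<lambda>\<omega>. W \<omega> - X \<omega>) (\<lambda>\<omega>. W \<omega> - X \<omega>) = (\<chi> j j'. if j = j' then a j else 0)"
    and a_nonneg: "\<forall>j. a j \<ge> 0"
  shows "let SigE = (\<chi> j j'. if j = j' then a j else 0) :: real^'d^'d;
             \<Omega> = matrix_inv (SigE + D - transpose C ** matrix_inv A ** C)
         in conv_in_prob M (\<lambda>N \<omega>. bXhat N \<omega> - \<beta>X) (- ((\<Omega> ** SigE) *v \<beta>X))
            \<and> (\<forall>j. \<Omega> $ j $ j > 0 \<and> (a j > 0 \<longrightarrow> \<Omega> $ j $ j \<le> 1 / a j))
            \<and> (\<forall>j j'. j \<noteq> j' \<longrightarrow> \<Omega> $ j $ j' \<le> 0)"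
proof -
  interpret prob_space M by (rule prob)
  define SigE :: "real^'d^'d" where "SigE = (\<chi> j j'. if j = j' then a j else 0)"
  define M0 where "M0 = SigE + D - transpose C ** matrix_inv A ** C"
  define \<Omega> where "\<Omega> = matrix_inv M0"
  \<comment> \<open>measurability and square integrability\<close>
  have mT: "\<And>g. continuous_on UNIV g \<Longrightarrow> (\<lambda>\<omega>. g (Y \<omega>, Z \<omega>, X \<omega>, W \<omega>)) \<in> borel_measurable M"
    by (rule meas_comp_cont[OF meas_pop])
  have mY: "Y \<in> borel_measurable M"
    using mT[of "\<lambda>t. fst t"] by (simp add: continuous_on_fst continuous_on_id)
  have mZ: "(\<lambda>\<omega>. Z \<omega> $ k) \<in> borel_measurable M" for k
    using mT[of "\<lambda>t. fst (snd t) $ k"] by (simp add: continuous_intros)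
  have mX: "(\<lambda>\<omega>. X \<omega> $ k) \<in> borel_measurable M" for k
    using mT[of "\<lambda>t. fst (snd (snd t)) $ k"] by (simp add: continuous_intros)
  have mW: "(\<lambda>\<omega>. W \<omega> $ k) \<in> borel_measurable M" for k
    using mT[of "\<lambda>t. snd (snd (snd t)) $ k"] by (simp add: continuous_intros)
  have cY: "(\<lambda>(y::real, z::real^'p, x::real^'d, w::real^'d). y) \<in> coords" by (simp add: coords_def)
  have cZ: "(\<lambda>(y::real, z::real^'p, x::real^'d, w::real^'d). z $ k) \<in> coords" for k by (auto simp: coords_def)
  have cX: "(\<lambda>(y::real, z::real^'p, x::real^'d, w::real^'d). x $ k) \<in> coords" for k by (auto simp: coords_def)
  have cW: "(\<lambda>(y::real, z::real^'p, x::real^'d, w::real^'d). w $ k) \<in> coords" for k by (auto simp: coords_def)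
  have c1: "(\<lambda>_::(real \<times> (real^'p) \<times> (real^'d) \<times> (real^'d)). 1::real) \<in> coords" by (simp add: coords_def)
  have LY: "Y \<in> L2 M" using mY bspec[OF sq_int cY] by (auto intro: L2I)
  have LZ: "(\<lambda>\<omega>. Z \<omega> $ k) \<in> L2 M" for k using mZ bspec[OF sq_int cZ] by (auto intro: L2I)
  have LX: "(\<lambda>\<omega>. X \<omega> $ k) \<in> L2 M" for k using mX bspec[OF sq_int cX] by (auto intro: L2I)
  have LW: "(\<lambda>\<omega>. W \<omega> $ k) \<in> L2 M" for k using mW bspec[OF sq_int cW] by (auto intro: L2I)
  have LE: "(\<lambda>\<omega>. (W \<omega> - X \<omega>) $ k) \<in> L2 M" for k using L2_diff[OF LW LX] by simp
  \<comment> \<open>independence of the measurement error\<close>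
  have mE: "(\<lambda>\<omega>. W \<omega> - X \<omega>) \<in> borel_measurable M"
    using mT[of "\<lambda>t. snd (snd (snd t)) - fst (snd (snd t))"] by (simp add: continuous_intros)
  have mZXY: "(\<lambda>\<omega>. (Z \<omega>, X \<omega>, Y \<omega>)) \<in> borel_measurable M"
    using mT[of "\<lambda>t. (fst (snd t), fst (snd (snd t)), fst t)"] by (simp add: continuous_intros)
  have indep0: "cov M (\<lambda>\<omega>. (W \<omega> - X \<omega>) $ j) (\<lambda>\<omega>. h (Z \<omega>, X \<omega>, Y \<omega>)) = 0"
    if hc: "continuous_on UNIV h" and hL: "(\<lambda>\<omega>. h (Z \<omega>, X \<omega>, Y \<omega>)) \<in> L2 M" for h :: "(real^'p) \<times> (real^'d) \<times> real \<Rightarrow> real" and j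
  proof -
    have "(\<integral>\<omega>. (W \<omega> - X \<omega>) $ j * h (Z \<omega>, X \<omega>, Y \<omega>) \<partial>M)
        = (\<integral>\<omega>. (W \<omega> - X \<omega>) $ j \<partial>M) * (\<integral>\<omega>. h (Z \<omega>, X \<omega>, Y \<omega>) \<partial>M)"
      by (rule indep_from_vimage[OF prob indepE mE mZXY, where f="\<lambda>e. e $ j" and g=h])
        (use L2_int[OF LE[of j]] L2_int[OF hL] in \<open>auto intro!: borel_measurable_continuous_onI hc continuous_intros\<close>)
    then show ?thesis unfolding cov_def by simp
  qed
  have cEZ: "cov M (\<lambda>\<omega>. (W \<omega> - X \<omega>) $ j) (\<lambda>\<omega>. Z \<omega> $ k) = 0" for j k
    using indep0[of "\<lambda>t. fst t $ k" j] LZ[of k] by (simp add: continuous_intros)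
  have cEX: "cov M (\<lambda>\<omega>. (W \<omega> - X \<omega>) $ j) (\<lambda>\<omega>. X \<omega> $ k) = 0" for j k
    using indep0[of "\<lambda>t. fst (snd t) $ k" j] LX[of k] by (simp add: continuous_intros)
  have cEY: "cov M (\<lambda>\<omega>. (W \<omega> - X \<omega>) $ j) Y = 0" for j
    using indep0[of "\<lambda>t. snd (snd t)" j] LY by (simp add: continuous_intros)
  \<comment> \<open>population normal equations\<close>
  have Ldot: "(\<lambda>\<omega>. U \<omega> \<bullet> b) \<in> L2 M" if "\<And>k. (\<lambda>\<omega>. U \<omega> $ k) \<in> L2 M" for U :: "'s \<Rightarrow> real^'n::finite" and b
  proof -
    have "(\<lambda>\<omega>. 0 + (\<Sum>k\<in>UNIV. b $ k * U \<omega> $ k)) \<in> L2 M" by (rule L2_lin) (rule that)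
    then show ?thesis by (simp add: inner_vec_def mult.commute)
  qed
  define eps where "eps \<omega> = Y \<omega> - \<alpha> - Z \<omega> \<bullet> \<beta>Z - X \<omega> \<bullet> \<beta>X" for \<omega>
  have Leps: "eps \<in> L2 M" unfolding eps_def
    by (intro L2_diff LY L2_const Ldot LZ LX)
  have foc: "(\<integral>\<omega>. eps \<omega> * (h0 + Z \<omega> \<bullet> hz + X \<omega> \<bullet> hx) \<partial>M) = 0" for h0 hz hx
  proof -
    define g where "g \<omega> = h0 + Z \<omega> \<bullet> hz + X \<omega> \<bullet> hx" for \<omega>
    have Lg: "g \<in> L2 M" unfolding g_def by (intro L2_add L2_const Ldot LZ LX)
    have i1: "integrable M (\<lambda>\<omega>. (eps \<omega>)\<^sup>2)" using Leps unfolding L2_def by auto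
    have i2: "integrable M (\<lambda>\<omega>. eps \<omega> * g \<omega>)" by (rule L2_int_mult[OF Leps Lg])
    have i3: "integrable M (\<lambda>\<omega>. (g \<omega>)\<^sup>2)" using Lg unfolding L2_def by auto
    have "0 \<le> - (t * (\<integral>\<omega>. eps \<omega> * g \<omega> \<partial>M)) + t\<^sup>2 * ((1/2) * (\<integral>\<omega>. (g \<omega>)\<^sup>2 \<partial>M))" for t
    proof -
      have "(\<integral>\<omega>. (1/2) * (Y \<omega> - \<alpha> - Z \<omega> \<bullet> \<beta>Z - X \<omega> \<bullet> \<beta>X)\<^sup>2 \<partial>M)
          \<le> (\<integral>\<omega>. (1/2) * (Y \<omega> - (\<alpha> + t * h0) - Z \<omega> \<bullet> (\<beta>Z + t *\<^sub>R hz) - X \<omega> \<bullet> (\<beta>X + t *\<^sub>R hx))\<^sup>2 \<partial>M)"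
        using pop_ls by blast
      also have "\<dots> = (\<integral>\<omega>. (1/2) * (eps \<omega>)\<^sup>2 - t * (eps \<omega> * g \<omega>) + t\<^sup>2 * ((1/2) * (g \<omega>)\<^sup>2) \<partial>M)"
        unfolding eps_def g_def
        by (intro Bochner_Integration.integral_cong refl) (simp add: inner_add_right power2_eq_square algebra_simps)
      also have "\<dots> = (1/2) * (\<integral>\<omega>. (eps \<omega>)\<^sup>2 \<partial>M) - t * (\<integral>\<omega>. eps \<omega> * g \<omega> \<partial>M) + t\<^sup>2 * ((1/2) * (\<integral>\<omega>. (g \<omega>)\<^sup>2 \<partial>M))"
        using i1 i2 i3 by simp
      finally show ?thesis unfolding eps_def[symmetric] by simp
    qed
    then have "(\<integral>\<omega>. eps \<omega> * g \<omega> \<partial>M) = 0" by (rule quad_zero)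
    then show ?thesis unfolding g_def .
  qed
  have Eeps: "(\<integral>\<omega>. eps \<omega> \<partial>M) = 0" using foc[of 1 0 0] by simp
  have ceZ: "cov M eps (\<lambda>\<omega>. Z \<omega> $ k) = 0" for k
    using foc[of 0 "axis k 1" 0] Eeps unfolding cov_def by (simp add: inner_axis1)
  have ceX: "cov M eps (\<lambda>\<omega>. X \<omega> $ k) = 0" for k
    using foc[of 0 0 "axis k 1"] Eeps unfolding cov_def by (simp add: inner_axis1)
  \<comment> \<open>covariance structure\<close>
  have Wsplit: "(\<lambda>\<omega>. W \<omega> $ j) = (\<lambda>\<omega>. X \<omega> $ j + (W \<omega> - X \<omega>) $ j)" for j by auto
  have covZW: "cov M (\<lambda>\<omega>. Z \<omega> $ k) (\<lambda>\<omega>. W \<omega> $ j) = B $ k $ j" for k j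
  proof -
    have "cov M (\<lambda>\<omega>. Z \<omega> $ k) (\<lambda>\<omega>. W \<omega> $ j) = cov M (\<lambda>\<omega>. Z \<omega> $ k) (\<lambda>\<omega>. X \<omega> $ j) + cov M (\<lambda>\<omega>. Z \<omega> $ k) (\<lambda>\<omega>. (W \<omega> - X \<omega>) $ j)"
      unfolding Wsplit by (rule cov_add_right[OF LX LE LZ])
    also have "cov M (\<lambda>\<omega>. Z \<omega> $ k) (\<lambda>\<omega>. (W \<omega> - X \<omega>) $ j) = 0" using cEZ by (simp add: cov_sym)
    finally show ?thesis by (simp add: B_def covmat_def)
  qed
  have CB: "C = B" unfolding vec_eq_iff using covZW by (simp add: C_def covmat_def)
  have covXW: "cov M (\<lambda>\<omega>. X \<omega> $ k) (\<lambda>\<omega>. W \<omega> $ j) = D $ k $ j" for k j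
  proof -
    have "cov M (\<lambda>\<omega>. X \<omega> $ k) (\<lambda>\<omega>. W \<omega> $ j) = cov M (\<lambda>\<omega>. X \<omega> $ k) (\<lambda>\<omega>. X \<omega> $ j) + cov M (\<lambda>\<omega>. X \<omega> $ k) (\<lambda>\<omega>. (W \<omega> - X \<omega>) $ j)"
      unfolding Wsplit by (rule cov_add_right[OF LX LE LX])
    also have "cov M (\<lambda>\<omega>. X \<omega> $ k) (\<lambda>\<omega>. (W \<omega> - X \<omega>) $ j) = 0" using cEX by (simp add: cov_sym)
    finally show ?thesis by (simp add: D_def covmat_def)
  qed
  have covWW: "cov M (\<lambda>\<omega>. W \<omega> $ k) (\<lambda>\<omega>. W \<omega> $ j) = D $ k $ j + SigE $ k $ j" for k j
  proof -
    have "cov M (\<lambda>\<omega>. W \<omega> $ k) (\<lambda>\<omega>. W \<omega> $ j) = cov M (\<lambda>\<omega>. X \<omega> $ k) (\<lambda>\<omega>. W \<omega> $ j) + cov M (\<lambda>\<omega>. (W \<omega> - X \<omega>) $ k) (\<lambda>\<omega>. W \<omega> $ j)"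
      by (subst (1) Wsplit[of k]) (rule cov_add_left[OF LX LE LW])
    also have "cov M (\<lambda>\<omega>. (W \<omega> - X \<omega>) $ k) (\<lambda>\<omega>. W \<omega> $ j) = cov M (\<lambda>\<omega>. (W \<omega> - X \<omega>) $ k) (\<lambda>\<omega>. X \<omega> $ j) + cov M (\<lambda>\<omega>. (W \<omega> - X \<omega>) $ k) (\<lambda>\<omega>. (W \<omega> - X \<omega>) $ j)"
      unfolding Wsplit by (rule cov_add_right[OF LX LE LE])
    also have "cov M (\<lambda>\<omega>. (W \<omega> - X \<omega>) $ k) (\<lambda>\<omega>. (W \<omega> - X \<omega>) $ j) = SigE $ k $ j"
      using arg_cong[OF covE, of "\<lambda>m. m $ k $ j"] unfolding SigE_def by (simp add: covmat_def)
    finally show ?thesis using covXW cEX by simp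
  qed
  define V1 where "V1 = (\<lambda>\<omega>. stack (Z \<omega>) (X \<omega>))"
  define V2 where "V2 = (\<lambda>\<omega>. stack (Z \<omega>) (W \<omega>))"
  have LV1: "(\<lambda>\<omega>. V1 \<omega> $ m) \<in> L2 M" for m by (cases m) (simp_all add: V1_def LZ LX)
  have LV2: "(\<lambda>\<omega>. V2 \<omega> $ m) \<in> L2 M" for m by (cases m) (simp_all add: V2_def LZ LW)
  define SX where "SX = covmat M V1 V1"
  define SW where "SW = covmat M V2 V2"
  have SXe: "SX $ Inl k $ Inl l = A $ k $ l" "SX $ Inl k $ Inr j = B $ k $ j"
    "SX $ Inr j $ Inl k = transpose B $ j $ k" "SX $ Inr j $ Inr j' = D $ j $ j'" for k l j j'
    by (simp_all add: SX_def V1_def covmat_def A_def B_def D_def transpose_def cov_sym)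
  have SWe: "SW $ Inl k $ Inl l = A $ k $ l" "SW $ Inl k $ Inr j = B $ k $ j"
    "SW $ Inr j $ Inl k = transpose B $ j $ k" "SW $ Inr j $ Inr j' = (D + SigE) $ j $ j'" for k l j j'
    by (simp add: SW_def V2_def covmat_def A_def, simp add: SW_def V2_def covmat_def covZW,
        simp add: SW_def V2_def covmat_def transpose_def covZW cov_sym[of "\<lambda>\<omega>. W \<omega> $ j"],
        simp add: SW_def V2_def covmat_def covWW)
  define a' :: "'p + 'd \<Rightarrow> real" where "a' = case_sum (\<lambda>_. 0) a"
  define Dg where "Dg = diagm (range Inr) a'"
  have SWX: "SW = SX + Dg"
    unfolding vec_eq_iff
  proof (intro allI)
    fix m n :: "'p + 'd"
    show "SW $ m $ n = (SX + Dg) $ m $ n"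
      by (cases m; cases n) (auto simp: SXe SWe Dg_def diagm_def a'_def SigE_def)
  qed
  have pdX: "pos_def_mat SX" using pd_ZX unfolding SX_def V1_def .
  have pdW: "pos_def_mat SW" using pd_ZW unfolding SW_def V2_def .
  \<comment> \<open>the precision matrix of (Z,X) and the inverse of Cov(Z,W)\<close>
  obtain PX where PX: "SX ** PX = mat 1" "PX ** SX = mat 1" using pd_inv[OF pdX] by blast
  interpret v1: vecrv M V1
    by (rule vecrv.intro[OF prob]) (simp add: vecrv_axioms_def LV1)
  have pdX': "pos_def_mat (covmat M V1 V1)" using pdX unfolding SX_def .
  have zPX: "zmat_on (range Inr) PX"
    unfolding zmat_on_def
  proof (intro ballI impI)
    fix k l :: "'p + 'd" assume "k \<in> range Inr" "l \<in> range Inr" "k \<noteq> l"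
    then obtain j j' where jj: "k = Inr j" "l = Inr j'" "j \<noteq> j'" by auto
    have pc: "partial_corr M V1 (Inr j) (Inr j') > 0" using ppc jj(3) unfolding V1_def by blast
    have "PX $ Inr j $ Inr j' < 0"
      by (rule v1.pcorr_sign[OF pdX' PX[unfolded SX_def] _ pc]) (use jj in simp)
    then show "PX $ k $ l \<le> 0" using jj by simp
  qed
  have a'0: "a' k \<ge> 0" for k using a_nonneg by (cases k) (auto simp: a'_def)
  have SMr: "pos_def_mat (SX + diagm (range Inr) a') \<and> (\<exists>P'. (SX + diagm (range Inr) a') ** P' = mat 1 \<and> P' ** (SX + diagm (range Inr) a') = mat 1 \<and> zmat_on (range Inr) P')"
    by (rule SM_iter[OF pdX PX(1) PX(2) zPX]) (auto intro: a'0)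
  obtain Q where Q: "SW ** Q = mat 1" "Q ** SW = mat 1" "zmat_on (range Inr) Q"
    using SMr unfolding SWX Dg_def by blast
  \<comment> \<open>A is invertible\<close>
  have SXmv: "SX *v stack u v = stack (A *v u + B *v v) (transpose B *v u + D *v v)" for u v
    by (rule block_mv) (simp_all add: SXe)
  have pdA: "pos_def_mat A"
    unfolding pos_def_mat_def
  proof (intro conjI allI impI)
    show "transpose A = A" by (simp add: A_def covmat_def transpose_def vec_eq_iff cov_sym)
    fix u :: "real^'p" assume "u \<noteq> 0"
    then have "stack u 0 \<noteq> 0" by (simp add: stack_eq0)
    then have "stack u 0 \<bullet> (SX *v stack u 0) > 0" using pdX unfolding pos_def_mat_def by blast
    then show "u \<bullet> (A *v u) > 0" unfolding SXmv by (simp add: inner_stack)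
  qed
  obtain Ai where Ai: "A ** Ai = mat 1" "Ai ** A = mat 1" using pd_inv[OF pdA] by blast
  have invA: "matrix_inv A = Ai" by (rule inv_unique[OF Ai(1)])
  define QXZ :: "real^'p^'d" where "QXZ = (\<chi> j k. Q $ Inr j $ Inl k)"
  define QXX :: "real^'d^'d" where "QXX = (\<chi> j j'. Q $ Inr j $ Inr j')"
  have b1: "QXZ ** A + QXX ** transpose B = 0"
  proof -
    have "(QXZ ** A + QXX ** transpose B) $ j $ l = (Q ** SW) $ Inr j $ Inl l" for j l
      by (simp add: mat_mult_entry sum_Plus_UNIV QXZ_def QXX_def SWe)
    then show ?thesis using Q(2) by (simp add: vec_eq_iff mat1_entry)
  qed
  have b2: "QXZ ** B + QXX ** (D + SigE) = mat 1"
  proof -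
    have "(QXZ ** B + QXX ** (D + SigE)) $ j $ l = (Q ** SW) $ Inr j $ Inr l" for j l
      by (simp add: mat_mult_entry sum_Plus_UNIV QXZ_def QXX_def SWe)
    then show ?thesis using Q(2) by (simp add: vec_eq_iff mat1_entry)
  qed
  have QM0: "QXX ** M0 = mat 1"
  proof -
    have QXZe: "QXZ = - (QXX ** transpose B ** Ai)"
    proof -
      have "QXZ = QXZ ** (A ** Ai)" using Ai by simp
      also have "\<dots> = (QXZ ** A) ** Ai" by (simp add: matrix_mul_assoc)
      also have "QXZ ** A = - (QXX ** transpose B)" using b1 by (simp add: eq_neg_iff_add_eq_0)
      finally show ?thesis by (simp add: mat_neg_mult)
    qed
    have M0e: "M0 = (D + SigE) - transpose B ** Ai ** B" unfolding M0_def CB invA by (simp add: add.commute)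
    have "QXX ** M0 = QXX ** (D + SigE) - QXX ** (transpose B ** Ai ** B)"
      unfolding M0e by (rule mat_mult_diff)
    also have "QXX ** (transpose B ** Ai ** B) = - (QXZ ** B)"
      unfolding QXZe by (simp add: mat_neg_mult matrix_mul_assoc)
    finally show ?thesis using b2 by (simp add: add.commute)
  qed
  have QM0': "M0 ** QXX = mat 1" using QM0 matrix_left_right_inverse by blast
  have OmQ: "\<Omega> = QXX" unfolding \<Omega>_def by (rule inv_unique[OF QM0'])
  have Ome: "\<Omega> $ j $ j' = Q $ Inr j $ Inr j'" for j j' unfolding OmQ QXX_def by simp
  have P2: "\<forall>j. \<Omega> $ j $ j > 0 \<and> (a j > 0 \<longrightarrow> \<Omega> $ j $ j \<le> 1 / a j)"
  proof (intro allI conjI impI)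
    fix j
    show "\<Omega> $ j $ j > 0" unfolding Ome by (rule pd_inv_diag_pos[OF pdW Q(1)])
    assume aj: "a j > 0"
    have bnd: "u \<bullet> (SW *v u) \<ge> a j * (u $ Inr j)\<^sup>2" for u
    proof -
      have "u \<bullet> (SW *v u) = u \<bullet> (SX *v u) + (\<Sum>k\<in>range Inr. a' k * (u $ k)\<^sup>2)"
        unfolding SWX Dg_def by (rule quad_diagm)
      moreover have "u \<bullet> (SX *v u) \<ge> 0" using pdX unfolding pos_def_mat_def
        by (cases "u = 0") (auto intro: less_imp_le)
      moreover have "(\<Sum>k\<in>range Inr. a' k * (u $ k)\<^sup>2) \<ge> a' (Inr j) * (u $ Inr j)\<^sup>2"
        by (rule member_le_sum) (auto intro: a'0 mult_nonneg_nonneg)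
      ultimately show ?thesis by (simp add: a'_def)
    qed
    show "\<Omega> $ j $ j \<le> 1 / a j" unfolding Ome by (rule pd_inv_diag_le[OF pdW Q(1) bnd aj])
  qed
  have P3: "\<forall>j j'. j \<noteq> j' \<longrightarrow> \<Omega> $ j $ j' \<le> 0"
    using Q(3) unfolding zmat_on_def Ome by auto
  have conv: "conv_in_prob M (\<lambda>N \<omega>. bXhat N \<omega> - \<beta>X) (- ((\<Omega> ** SigE) *v \<beta>X))"
  proof -
  \<comment> \<open>population target of the OLS coefficients\<close>
  define bb where "bb = stack \<beta>Z \<beta>X"
  define bs where "bs = bb - Q *v (Dg *v bb)"
  define cp where "cp = (\<chi> m. cov M (\<lambda>\<omega>. V2 \<omega> $ m) Y)"
  have Ylin: "Y = (\<lambda>\<omega>. (\<alpha> + (\<Sum>m\<in>UNIV. bb $ m * V1 \<omega> $ m)) + eps \<omega>)"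
    unfolding eps_def bb_def V1_def by (rule ext) (simp add: inner_vec_def sum_Plus_UNIV mult.commute)
  have covY: "cov M h Y = (\<Sum>m\<in>UNIV. bb $ m * cov M h (\<lambda>\<omega>. V1 \<omega> $ m)) + cov M h eps" if hL: "h \<in> L2 M" for h
  proof -
    have "cov M h Y = cov M h (\<lambda>\<omega>. \<alpha> + (\<Sum>m\<in>UNIV. bb $ m * V1 \<omega> $ m)) + cov M h eps"
      by (subst Ylin) (rule cov_add_right[OF L2_lin[OF LV1] Leps hL])
    also have "cov M h (\<lambda>\<omega>. \<alpha> + (\<Sum>m\<in>UNIV. bb $ m * V1 \<omega> $ m)) = (\<Sum>m\<in>UNIV. bb $ m * cov M h (\<lambda>\<omega>. V1 \<omega> $ m))"
      by (rule cov_lin_right[OF LV1 hL])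
    finally show ?thesis .
  qed
  have SXent: "SX $ m $ m' = cov M (\<lambda>\<omega>. V1 \<omega> $ m) (\<lambda>\<omega>. V1 \<omega> $ m')" for m m'
    by (simp add: SX_def covmat_def)
  have cpX: "cp = SX *v bb"
    unfolding vec_eq_iff
  proof
    fix m :: "'p + 'd"
    show "cp $ m = (SX *v bb) $ m"
    proof (cases m)
      case (Inl k)
      have "cp $ m = cov M (\<lambda>\<omega>. Z \<omega> $ k) Y" unfolding cp_def Inl V2_def by simp
      also have "\<dots> = (\<Sum>m'\<in>UNIV. bb $ m' * cov M (\<lambda>\<omega>. Z \<omega> $ k) (\<lambda>\<omega>. V1 \<omega> $ m'))"
        using covY[OF LZ[of k]] ceZ[of k] by (simp add: cov_sym[of _ eps])
      also have "\<dots> = (SX *v bb) $ m"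
        unfolding Inl by (simp add: matrix_vector_mult_def SXent V1_def mult.commute)
      finally show ?thesis .
    next
      case (Inr j)
      have "cp $ m = cov M (\<lambda>\<omega>. W \<omega> $ j) Y" unfolding cp_def Inr V2_def by simp
      also have "\<dots> = cov M (\<lambda>\<omega>. X \<omega> $ j) Y + cov M (\<lambda>\<omega>. (W \<omega> - X \<omega>) $ j) Y"
        unfolding Wsplit by (rule cov_add_left[OF LX LE LY])
      also have "\<dots> = (\<Sum>m'\<in>UNIV. bb $ m' * cov M (\<lambda>\<omega>. X \<omega> $ j) (\<lambda>\<omega>. V1 \<omega> $ m'))"
        using covY[OF LX[of j]] ceX[of j] cEY[of j] by (simp add: cov_sym[of _ eps])
      also have "\<dots> = (SX *v bb) $ m"
        unfolding Inr by (simp add: matrix_vector_mult_def SXent V1_def mult.commute)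
      finally show ?thesis .
    qed
  qed
  have SWbs: "SW *v bs = cp"
  proof -
    have "SW *v bs = SW *v bb - (SW ** Q) *v (Dg *v bb)"
      unfolding bs_def by (simp add: matrix_vector_mult_diff_distrib matrix_vector_mul_assoc matrix_mul_assoc)
    also have "\<dots> = SW *v bb - Dg *v bb" using Q(1) by simp
    also have "\<dots> = SX *v bb" unfolding SWX by (simp add: matrix_vector_mult_add_rdistrib)
    finally show ?thesis using cpX by simp
  qed
  define bsZ where "bsZ = (\<chi> k. bs $ Inl k)"
  define bsX where "bsX = (\<chi> j. bs $ Inr j)"
  have bsst: "bs = stack bsZ bsX" unfolding bsZ_def bsX_def by (rule stack_split)
  have Dgv: "Dg *v x = (\<chi> m. if m \<in> range Inr then a' m * x $ m else 0)" for x
    by (simp add: Dg_def diagm_def vec_eq_iff matrix_vector_mult_def if_distrib if_distribR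
        sum_delta_mult_l cong: if_cong)
  have bsXe: "bsX - \<beta>X = - ((\<Omega> ** SigE) *v \<beta>X)"
    unfolding vec_eq_iff
  proof
    fix j
    have "(bsX - \<beta>X) $ j = - (Q *v (Dg *v bb)) $ Inr j"
      unfolding bsX_def bs_def bb_def by simp
    also have "(Q *v (Dg *v bb)) $ Inr j = (\<Sum>j'\<in>UNIV. Q $ Inr j $ Inr j' * (a j' * \<beta>X $ j'))"
      unfolding Dgv by (simp add: matrix_vector_mult_def sum_Plus_UNIV a'_def bb_def image_iff)
    also have "\<dots> = ((\<Omega> ** SigE) *v \<beta>X) $ j"
      by (simp add: matrix_vector_mult_def mat_mult_entry SigE_def Ome sum_delta_mult_r mult.assoc
          if_distrib if_distribR cong: if_cong)
    finally show "(bsX - \<beta>X) $ j = (- ((\<Omega> ** SigE) *v \<beta>X)) $ j" by simp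
  qed
  \<comment> \<open>sample moments\<close>
  define fv where "fv m = (\<lambda>(y::real, z::real^'p, x::real^'d, w::real^'d). stack z w $ m)" for m
  define fy where "fy = (\<lambda>(y::real, z::real^'p, x::real^'d, w::real^'d). y)"
  define f1 where "f1 = (\<lambda>_::(real \<times> (real^'p) \<times> (real^'d) \<times> (real^'d)). 1::real)"
  have fvc: "fv m \<in> coords" for m
  proof (cases m)
    case (Inl k)
    have "fv m = (\<lambda>(y::real, z::real^'p, x::real^'d, w::real^'d). z $ k)"
      unfolding fv_def Inl by (auto simp: fun_eq_iff)
    then show ?thesis using cZ by simp
  next
    case (Inr k)
    have "fv m = (\<lambda>(y::real, z::real^'p, x::real^'d, w::real^'d). w $ k)"
      unfolding fv_def Inr by (auto simp: fun_eq_iff)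
    then show ?thesis using cW by simp
  qed
  have fyc: "fy \<in> coords" using cY unfolding fy_def .
  have f1c: "f1 \<in> coords" using c1 unfolding f1_def .
  define mom where "mom f g N \<omega> = (\<Sum>i<N. f (Ys i \<omega>, Zs i \<omega>, Xs i \<omega>, Ws i \<omega>) * g (Ys i \<omega>, Zs i \<omega>, Xs i \<omega>, Ws i \<omega>)) / real N"
    for f g :: "real \<times> (real^'p) \<times> (real^'d) \<times> (real^'d) \<Rightarrow> real" and N \<omega>
  define pm where "pm f g = (\<integral>\<omega>. f (Y \<omega>, Z \<omega>, X \<omega>, W \<omega>) * g (Y \<omega>, Z \<omega>, X \<omega>, W \<omega>) \<partial>M)"
    for f g :: "real \<times> (real^'p) \<times> (real^'d) \<times> (real^'d) \<Rightarrow> real"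
  have cm: "conv_in_prob M (mom f g) (pm f g)" if "f \<in> coords" "g \<in> coords" for f g
    using moments that unfolding mom_def pm_def by blast
  define Sh where "Sh N \<omega> = (\<chi> k l. mom (fv k) (fv l) N \<omega> - mom (fv k) f1 N \<omega> * mom (fv l) f1 N \<omega>)" for N \<omega>
  define ch where "ch N \<omega> = (\<chi> k. mom (fv k) fy N \<omega> - mom (fv k) f1 N \<omega> * mom fy f1 N \<omega>)" for N \<omega>
  have gcont: "isCont (\<lambda>p::real \<times> real \<times> real. fst p - fst (snd p) * snd (snd p)) q" for q
    by (intro continuous_intros)
  have comb: "conv_in_prob M (\<lambda>N \<omega>. mom f g N \<omega> - mom f' g' N \<omega> * mom f'' g'' N \<omega>) (pm f g - pm f' g' * pm f'' g'')"
    if "f \<in> coords" "g \<in> coords" "f' \<in> coords" "g' \<in> coords" "f'' \<in> coords" "g'' \<in> coords" for f g f' g' f'' g''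
  proof -
    have "conv_in_prob M (\<lambda>N \<omega>. (mom f g N \<omega>, mom f' g' N \<omega>, mom f'' g'' N \<omega>)) (pm f g, pm f' g', pm f'' g'')"
      by (intro conv_in_prob_pair[OF prob] cm that)
    from conv_in_prob_cont[OF this gcont] show ?thesis by simp
  qed
  have cSh: "conv_in_prob M Sh SW"
  proof (rule conv_in_prob_vec[OF prob])
    fix k
    show "conv_in_prob M (\<lambda>N \<omega>. Sh N \<omega> $ k) (SW $ k)"
    proof (rule conv_in_prob_vec[OF prob])
      fix l
      have "SW $ k $ l = pm (fv k) (fv l) - pm (fv k) f1 * pm (fv l) f1"
        by (simp add: SW_def covmat_def cov_def pm_def fv_def f1_def V2_def)
      then show "conv_in_prob M (\<lambda>N \<omega>. Sh N \<omega> $ k $ l) (SW $ k $ l)"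
        using comb[OF fvc fvc fvc f1c fvc f1c, of k l k l] by (simp add: Sh_def)
    qed
  qed
  have cch: "conv_in_prob M ch cp"
  proof (rule conv_in_prob_vec[OF prob])
    fix k
    have "cp $ k = pm (fv k) fy - pm (fv k) f1 * pm fy f1"
      by (simp add: cp_def cov_def pm_def fv_def f1_def fy_def V2_def)
    then show "conv_in_prob M (\<lambda>N \<omega>. ch N \<omega> $ k) (cp $ k)"
      using comb[OF fvc fyc fvc f1c fyc f1c, of k k] by (simp add: ch_def)
  qed
  have cV: "conv_in_prob M (\<lambda>N \<omega>. (Sh N \<omega>, ch N \<omega>)) (SW, cp)"
    by (rule conv_in_prob_pair[OF prob cSh cch])
  \<comment> \<open>sample normal equations\<close>
  have sne: "Sh N \<omega> *v stack (bZhat N \<omega>) (bXhat N \<omega>) = ch N \<omega>" if N0: "N > 0" for N \<omega>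
  proof -
    have min: "(\<Sum>i<N. (Ys i \<omega> - ahat N \<omega> - stack (Zs i \<omega>) (Ws i \<omega>) \<bullet> stack (bZhat N \<omega>) (bXhat N \<omega>))\<^sup>2)
        \<le> (\<Sum>i<N. (Ys i \<omega> - a' - stack (Zs i \<omega>) (Ws i \<omega>) \<bullet> b)\<^sup>2)" for a' b
    proof -
      have "(\<Sum>i<N. (Ys i \<omega> - a' - stack (Zs i \<omega>) (Ws i \<omega>) \<bullet> b)\<^sup>2)
          = (\<Sum>i<N. (Ys i \<omega> - a' - Zs i \<omega> \<bullet> (\<chi> k. b $ Inl k) - Ws i \<omega> \<bullet> (\<chi> j. b $ Inr j))\<^sup>2)"
        by (subst (1) stack_split[of b]) (simp add: inner_stack algebra_simps)
      then show ?thesis using ols by (simp add: inner_stack algebra_simps)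
    qed
    show ?thesis
      using ols_normal[where N=N and y="\<lambda>i. Ys i \<omega>" and az="ahat N \<omega>" and v="\<lambda>i. stack (Zs i \<omega>) (Ws i \<omega>)"
          and bz="stack (bZhat N \<omega>) (bXhat N \<omega>)", OF min N0]
      by (simp add: Sh_def ch_def mom_def fv_def f1_def fy_def)
  qed
  \<comment> \<open>deterministic perturbation bound\<close>
  have bnd: "\<exists>d>0. \<forall>N>0. \<forall>\<omega>\<in>space M. dist (Sh N \<omega>, ch N \<omega>) (SW, cp) < d
               \<longrightarrow> dist (bXhat N \<omega> - \<beta>X) (- ((\<Omega> ** SigE) *v \<beta>X)) \<le> e" if e0: "e > 0" for e
  proof -
    define \<kappa> where "\<kappa> = m1 Q"
    define n where "n = real CARD('p + 'd)"
    define nd where "nd = real CARD('d)"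
    define L where "L = 1 + n * n * norm bs"
    have \<kappa>0: "\<kappa> \<ge> 0" unfolding \<kappa>_def by (rule m1_nonneg)
    have nd1: "nd \<ge> 1" unfolding nd_def by (simp add: Suc_le_eq)
    have "n = real CARD('p) + real CARD('d)" unfolding n_def by simp
    then have n1: "n \<ge> 1" using nd1 unfolding nd_def by linarith
    have L1: "L \<ge> 1" unfolding L_def using n1 by simp
    define X where "X = (\<kappa> + 1) * (n * n)"
    have X0: "X > 0" unfolding X_def using \<kappa>0 n1 by (intro mult_pos_pos) auto
    define Y where "Y = 2 * (\<kappa> + 1) * L * nd"
    have Y0: "Y > 0" unfolding Y_def using \<kappa>0 L1 nd1 by (intro mult_pos_pos) auto
    define d where "d = min (1 / (2 * X)) (e / Y)"
    have dX: "d = min (1 / (2 * X)) (e / Y)" unfolding d_def ..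
    have d0: "d > 0" unfolding dX using X0 Y0 e0 by simp
    have d1: "(\<kappa> + 1) * (n * n * d) \<le> 1/2"
    proof -
      have "d \<le> 1 / (2 * X)" unfolding dX by simp
      then have "X * d \<le> X * (1 / (2 * X))" using X0 by (intro mult_left_mono) auto
      also have "\<dots> = 1/2" using X0 by simp
      finally show ?thesis unfolding X_def by (simp add: mult.assoc)
    qed
    have d2: "nd * (2 * (\<kappa> + 1) * d * L) \<le> e"
    proof -
      have "d \<le> e / Y" unfolding dX by simp
      then have "Y * d \<le> Y * (e / Y)" using Y0 by (intro mult_left_mono) auto
      also have "\<dots> = e" using Y0 by simp
      finally show ?thesis unfolding Y_def by (simp add: algebra_simps)
    qed
    show ?thesis
    proof (intro exI[of _ d] conjI allI impI ballI d0)
      fix N :: nat and \<omega> assume N0: "N > 0" and "\<omega> \<in> space M" and dd: "dist (Sh N \<omega>, ch N \<omega>) (SW, cp) < d"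
      define \<Delta> where "\<Delta> = Sh N \<omega> - SW"
      define \<delta>c where "\<delta>c = ch N \<omega> - cp"
      define bh where "bh = stack (bZhat N \<omega>) (bXhat N \<omega>)"
      define ev where "ev = bh - bs"
      have nD: "norm \<Delta> < d"
        using dd[unfolded dist_Pair_Pair] real_sqrt_sum_squares_ge1[of "dist (Sh N \<omega>) SW" "dist (ch N \<omega>) cp"]
        unfolding \<Delta>_def dist_norm by linarith
      have nc: "norm \<delta>c < d"
        using dd[unfolded dist_Pair_Pair] real_sqrt_sum_squares_ge2[of "dist (ch N \<omega>) cp" "dist (Sh N \<omega>) SW"]
        unfolding \<delta>c_def dist_norm by linarith
      have m1D: "m1 \<Delta> \<le> n * n * d"
      proof -
        have "m1 \<Delta> \<le> n * n * norm \<Delta>" using m1_le_norm[of \<Delta>] unfolding n_def by simp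
        also have "\<dots> \<le> n * n * d" using nD n1 by (intro mult_left_mono) auto
        finally show ?thesis .
      qed
      have m1D0: "m1 \<Delta> \<ge> 0" by (rule m1_nonneg)
      have SWev: "SW *v ev = \<delta>c - \<Delta> *v bh"
        unfolding ev_def \<delta>c_def \<Delta>_def
        by (simp add: matrix_vector_mult_diff_distrib matrix_vector_mult_diff_rdistrib SWbs sne[OF N0] bh_def)
      have evQ: "ev = Q *v (\<delta>c - \<Delta> *v bs - \<Delta> *v ev)"
      proof -
        have "ev = (Q ** SW) *v ev" using Q(2) by simp
        also have "\<dots> = Q *v (SW *v ev)" by (simp add: matrix_vector_mul_assoc)
        also have "bh = bs + ev" unfolding ev_def by simp
        then have "SW *v ev = \<delta>c - \<Delta> *v bs - \<Delta> *v ev" unfolding SWev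
          by (simp add: matrix_vector_right_distrib)
        finally show ?thesis .
      qed
      have "norm ev \<le> \<kappa> * norm (\<delta>c - \<Delta> *v bs - \<Delta> *v ev)"
        using norm_mv_le[of Q "\<delta>c - \<Delta> *v bs - \<Delta> *v ev"] evQ unfolding \<kappa>_def by simp
      also have "norm (\<delta>c - \<Delta> *v bs - \<Delta> *v ev) \<le> norm \<delta>c + m1 \<Delta> * norm bs + m1 \<Delta> * norm ev"
      proof -
        have "norm (\<delta>c - \<Delta> *v bs - \<Delta> *v ev) \<le> norm \<delta>c + norm (\<Delta> *v bs) + norm (\<Delta> *v ev)"
          by (smt (verit) norm_triangle_ineq4)
        then show ?thesis using norm_mv_le[of \<Delta> bs] norm_mv_le[of \<Delta> ev] by linarith
      qed
      finally have e1: "norm ev \<le> \<kappa> * (norm \<delta>c + m1 \<Delta> * norm bs + m1 \<Delta> * norm ev)"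
        using \<kappa>0 by (simp add: mult_left_mono)
      have km: "\<kappa> * m1 \<Delta> \<le> 1/2"
      proof -
        have "\<kappa> * m1 \<Delta> \<le> (\<kappa> + 1) * (n * n * d)"
          using \<kappa>0 m1D m1D0 by (intro mult_mono) auto
        then show ?thesis using d1 by linarith
      qed
      have "\<kappa> * m1 \<Delta> * norm ev \<le> 1/2 * norm ev" using km by (intro mult_right_mono) auto
      then have "norm ev \<le> 2 * (\<kappa> * (norm \<delta>c + m1 \<Delta> * norm bs))"
        using e1 by (simp add: algebra_simps)
      also have "\<kappa> * (norm \<delta>c + m1 \<Delta> * norm bs) \<le> (\<kappa> + 1) * (d + n * n * d * norm bs)"
      proof (rule mult_mono)
        show "norm \<delta>c + m1 \<Delta> * norm bs \<le> d + n * n * d * norm bs"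
          using nc m1D by (intro add_mono mult_right_mono) auto
      qed (use \<kappa>0 m1D0 in auto)
      also have "d + n * n * d * norm bs = d * L" unfolding L_def by (simp add: algebra_simps)
      finally have nev: "norm ev \<le> 2 * (\<kappa> + 1) * d * L" by (simp add: algebra_simps)
      have "ev = stack (bZhat N \<omega> - bsZ) (bXhat N \<omega> - bsX)"
        unfolding ev_def bh_def by (subst bsst) (simp add: stack_diff)
      then have "norm (bXhat N \<omega> - bsX) \<le> nd * norm ev"
        unfolding nd_def by (simp add: norm_Inr_le)
      also have "\<dots> \<le> nd * (2 * (\<kappa> + 1) * d * L)" using nev nd1 by (intro mult_left_mono) auto
      also have "\<dots> \<le> e" by (rule d2)
      finally have "norm (bXhat N \<omega> - bsX) \<le> e" .
      moreover have "dist (bXhat N \<omega> - \<beta>X) (- ((\<Omega> ** SigE) *v \<beta>X)) = norm (bXhat N \<omega> - bsX)"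
        unfolding bsXe[symmetric] dist_norm by (simp add: algebra_simps)
      ultimately show "dist (bXhat N \<omega> - \<beta>X) (- ((\<Omega> ** SigE) *v \<beta>X)) \<le> e" by simp
    qed
  qed
  show ?thesis
    by (rule conv_in_prob_transfer[OF cV bnd])
  qed
  show ?thesis
    unfolding Let_def SigE_def[symmetric] M0_def[symmetric] \<Omega>_def[symmetric]
    using conv P2 P3 by blast
qed

end
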